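(* In the ladder model, the density of the stationary distribution of the Markov chain $(\Delta_n)_{n\ge0}$ is $$\rho_\infty(d)=\frac{1}{2\,\mathrm{J}_2(2)}\,e^{-\frac32|d|}\,\mathrm{J}_1\!\left(2e^{-\frac12|d|}\right),\qquad d\in\mathbb{R},$$ where $\mathrm{J}_\nu$ denotes the Bessel function of the first kind of order $\nu$.
   Context: Ladder model $\mathcal{G}^{\{\mathcal{X},\mathcal{Y},\mathcal{Z}\}}$: for $n\ge0$, $G_n$ has vertex set $\{0,\dots,n\}\times\{0,1\}$ and edges: for $1\le i\le n$, an edge with weight $X_i$ joining $(i-1,0)$ and $(i,0)$, an edge with weight $Y_i$ joining $(i-1,1)$ and $(i,1)$; for $0\le i\le n$, an edge with weight $Z_i$ joining $(i,0)$ and $(i,1)$. All weights are independent standard exponential random variables. Path weight = sum of edge weights. $l_n$ ($l_n'$) is the minimal weight of a path in $G_n$ from $(0,0)$ to $(n,0)$ (to $(n,1)$), and $\Delta_n=l_n'-l_n$; $(\Delta_n)$ is a Markov chain given by $\Delta_0$ standard exponential and $\Delta_n=\min\{\Delta_{n-1}+Y_n,X_n+Z_n\}-\min\{X_n,\Delta_{n-1}+Y_n+Z_n\}$. *)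

theory Defs
  imports "HOL-Probability.Probability"
begin

definition bessel_J :: "nat \<Rightarrow> real \<Rightarrow> real" where
  "bessel_J n x = (\<Sum>k. (-1) ^ k / (fact k * fact (k + n)) * (x / 2) ^ (2 * k + n))"

definition std_exp :: "real measure" where
  "std_exp = density lborel (exponential_density 1)"

definition ladder_step :: "real \<Rightarrow> real \<Rightarrow> real \<Rightarrow> real \<Rightarrow> real" where
  "ladder_step d x y z = min (d + y) (x + z) - min x (d + y + z)"

definition ladder_transition :: "real measure \<Rightarrow> real measure" where
  "ladder_transition \<mu> =
     distr (\<mu> \<Otimes>\<^sub>M (std_exp \<Otimes>\<^sub>M (std_exp \<Otimes>\<^sub>M std_exp))) borel
       (\<lambda>(d, x, y, z). ladder_step d x y z)"

definition ladder_stationary :: "real measure \<Rightarrow> bool" where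
  "ladder_stationary \<mu> \<longleftrightarrow> prob_space \<mu> \<and> sets \<mu> = sets borel \<and> ladder_transition \<mu> = \<mu>"

definition rho_inf :: "real \<Rightarrow> real" where
  "rho_inf d = 1 / (2 * bessel_J 2 2) * exp (- (3/2) * \<bar>d\<bar>) * bessel_J 1 (2 * exp (- (1/2) * \<bar>d\<bar>))"

end

theory Submission
  imports Defs
begin


definition entire :: "(nat \<Rightarrow> real) \<Rightarrow> bool" where
  "entire \<beta> \<longleftrightarrow> (\<forall>r\<ge>0. summable (\<lambda>k. \<bar>\<beta> k\<bar> * r ^ k))"

definition ser :: "(nat \<Rightarrow> real) \<Rightarrow> nat \<Rightarrow> real \<Rightarrow> real" where
  "ser \<beta> m u = (\<Sum>k. \<beta> k * exp (- (real (k + m) * u)))"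

lemma pow2_ge: "real k + 1 \<le> 2 ^ k"
proof (induction k)
  case (Suc k) then show ?case by simp
qed simp

lemma entire_lin:
  assumes "entire \<beta>" "c \<ge> 0"
  shows "entire (\<lambda>k. (real k + c) * \<beta> k)"
  unfolding entire_def
proof (intro allI impI)
  fix r :: real assume r: "r \<ge> 0"
  have s: "summable (\<lambda>k. \<bar>\<beta> k\<bar> * (2*r) ^ k)" using assms r unfolding entire_def by (drule_tac spec[of _ "2*r"]) simp
  show "summable (\<lambda>k. \<bar>(real k + c) * \<beta> k\<bar> * r ^ k)"
  proof (rule summable_comparison_test'[where N=0])
    show "summable (\<lambda>k. (c+1) * (\<bar>\<beta> k\<bar> * (2*r) ^ k))" using s by (rule summable_mult)
  next
    fix n :: nat
    have p: "(1::real) \<le> 2^n" by simp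
    have "c * 1 \<le> c * 2^n" by (rule mult_left_mono[OF p assms(2)])
    moreover have "(c+1)*2^n = c*2^n + 2^n" by (simp add: distrib_right)
    ultimately have "real n + c \<le> (c+1) * 2^n" using pow2_ge[of n] by linarith
    then have "\<bar>(real n + c) * \<beta> n\<bar> * r ^ n \<le> ((c+1) * 2^n) * \<bar>\<beta> n\<bar> * r^n"
      using assms(2) r by (intro mult_right_mono) (auto simp: abs_mult intro: mult_right_mono)
    then show "norm (\<bar>(real n + c) * \<beta> n\<bar> * r ^ n) \<le> (c+1) * (\<bar>\<beta> n\<bar> * (2*r) ^ n)"
      using r by (simp add: power_mult_distrib mult_ac)
  qed
qed

lemma entire_div:
  assumes "entire \<beta>" "c > 0"
  shows "entire (\<lambda>k. \<beta> k / (real k + c))"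
  unfolding entire_def
proof (intro allI impI)
  fix r :: real assume r: "r \<ge> 0"
  have s: "summable (\<lambda>k. \<bar>\<beta> k\<bar> * r ^ k)" using assms r unfolding entire_def by simp
  show "summable (\<lambda>k. \<bar>\<beta> k / (real k + c)\<bar> * r ^ k)"
  proof (rule summable_comparison_test'[where N=0])
    show "summable (\<lambda>k. (1/c) * (\<bar>\<beta> k\<bar> * r ^ k))" using s by (rule summable_mult)
  next
    fix n :: nat
    have "\<bar>\<beta> n / (real n + c)\<bar> = \<bar>\<beta> n\<bar> / (real n + c)" using assms(2) by simp
    also have "\<dots> \<le> \<bar>\<beta> n\<bar> / c" using assms(2) by (intro divide_left_mono) auto
    finally have "\<bar>\<beta> n / (real n + c)\<bar> * r ^ n \<le> \<bar>\<beta> n\<bar> / c * r ^ n"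
      using r by (intro mult_right_mono) auto
    then show "norm (\<bar>\<beta> n / (real n + c)\<bar> * r ^ n) \<le> (1/c) * (\<bar>\<beta> n\<bar> * r ^ n)"
      using r by simp
  qed
qed

lemma entire_cmult: "entire \<beta> \<Longrightarrow> entire (\<lambda>k. c * \<beta> k)"
  unfolding entire_def
  by (auto simp: abs_mult mult.assoc intro: summable_mult)

lemma entire_fact:
  assumes "\<And>k. \<bar>\<beta> k\<bar> \<le> 1 / fact k"
  shows "entire \<beta>"
  unfolding entire_def
proof (intro allI impI)
  fix r :: real assume r: "r \<ge> 0"
  show "summable (\<lambda>k. \<bar>\<beta> k\<bar> * r ^ k)"
  proof (rule summable_comparison_test'[where N=0])
    show "summable (\<lambda>k. inverse (fact k) * r ^ k)" by (rule summable_exp)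
  next
    fix n :: nat
    show "norm (\<bar>\<beta> n\<bar> * r ^ n) \<le> inverse (fact n) * r ^ n"
      using assms[of n] r by (simp add: mult_right_mono divide_inverse)
  qed
qed

lemma exp_nat_pow: "exp (- (real k * u)) = exp (-u) ^ k"
  by (simp add: exp_of_nat_mult[symmetric])

lemma ser_term_bound:
  assumes "u \<ge> v"
  shows "\<bar>\<beta> k * exp (- (real (k + m) * u))\<bar> \<le> exp (- (real m * v)) * (\<bar>\<beta> k\<bar> * exp (- v) ^ k)"
proof -
  have "exp (- (real (k + m) * u)) \<le> exp (- (real (k + m) * v))"
    using assms by (intro exp_le_cancel_iff[THEN iffD2]) (simp add: mult_left_mono)
  also have "\<dots> = exp (- (real m * v)) * exp (-v) ^ k"
    by (simp add: exp_nat_pow[symmetric] algebra_simps exp_add[symmetric])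
  finally show ?thesis by (simp add: abs_mult mult_left_mono mult_ac)
qed

lemma ser_summable_abs:
  assumes "entire \<beta>"
  shows "summable (\<lambda>k. \<bar>\<beta> k * exp (- (real (k + m) * u))\<bar>)"
proof (rule summable_comparison_test'[where N=0])
  show "summable (\<lambda>k. exp (- (real m * u)) * (\<bar>\<beta> k\<bar> * exp (- u) ^ k))"
    using assms unfolding entire_def by (intro summable_mult) auto
next
  fix n :: nat
  have "\<bar>\<beta> n * exp (- (real (n + m) * u))\<bar> \<le> exp (- (real m * u)) * (\<bar>\<beta> n\<bar> * exp (- u) ^ n)"
    by (rule ser_term_bound[where u=u and v=u]) simp
  then show "norm (\<bar>\<beta> n * exp (- (real (n + m) * u))\<bar>) \<le> exp (- (real m * u)) * (\<bar>\<beta> n\<bar> * exp (- u) ^ n)"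
    by simp
qed

lemma ser_summable:
  assumes "entire \<beta>"
  shows "summable (\<lambda>k. \<beta> k * exp (- (real (k + m) * u)))"
  by (rule summable_rabs_cancel[OF ser_summable_abs[OF assms]])

lemma ser_cmult: "entire \<beta> \<Longrightarrow> ser (\<lambda>k. c * \<beta> k) m u = c * ser \<beta> m u"
proof -
  assume a: "entire \<beta>"
  have "summable (\<lambda>k. \<beta> k * exp (- (real (k + m) * u)))" by (rule ser_summable[OF a])
  from suminf_mult[OF this, of c] show ?thesis unfolding ser_def by (simp add: mult.assoc)
qed

lemma ser_add: "entire \<beta> \<Longrightarrow> entire \<gamma> \<Longrightarrow> ser (\<lambda>k. \<beta> k + \<gamma> k) m u = ser \<beta> m u + ser \<gamma> m u"
proof -
  assume a: "entire \<beta>" "entire \<gamma>"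
  have "summable (\<lambda>k. \<beta> k * exp (- (real (k + m) * u)))" by (rule ser_summable[OF a(1)])
  moreover have "summable (\<lambda>k. \<gamma> k * exp (- (real (k + m) * u)))" by (rule ser_summable[OF a(2)])
  ultimately show ?thesis unfolding ser_def using suminf_add by (simp add: distrib_right suminf_add)
qed

lemma ser_shift: "entire \<beta> \<Longrightarrow> ser \<beta> (Suc m) u = exp (-u) * ser \<beta> m u"
proof -
  assume a: "entire \<beta>"
  have "summable (\<lambda>k. \<beta> k * exp (- (real (k + m) * u)))" by (rule ser_summable[OF a])
  from suminf_mult[OF this, of "exp (-u)"] show ?thesis
    unfolding ser_def by (simp add: algebra_simps exp_add[symmetric])
qed

lemma ser_zero: "ser \<beta> m 0 = (\<Sum>k. \<beta> k)"
  unfolding ser_def by simp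

lemma ser_deriv:
  assumes "entire \<beta>"
  shows "(ser \<beta> m has_real_derivative ser (\<lambda>k. - (real (k + m)) * \<beta> k) m u) (at u)"
proof -
  let ?S = "{u - 1 <..< u + 1}"
  let ?f = "\<lambda>n v. \<beta> n * exp (- (real (n + m) * v))"
  let ?f' = "\<lambda>n v. - (real (n + m)) * \<beta> n * exp (- (real (n + m) * v))"
  have ent: "entire (\<lambda>k. (real k + real m) * \<beta> k)" by (rule entire_lin[OF assms]) simp
  have D: "((\<lambda>v. \<Sum>n. ?f n v) has_field_derivative (\<Sum>n. ?f' n u)) (at u)"
  proof (rule has_field_derivative_series'(2)[where S = ?S and x0 = u and f = ?f and f' = ?f'])
    show "convex ?S" by simp
    show "(?f n has_field_derivative ?f' n x) (at x within ?S)" if "x \<in> ?S" for n x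
    proof -
      have "((\<lambda>v. - (real (n + m) * v)) has_real_derivative (- (real (n + m)))) (at x within ?S)"
        using DERIV_minus[OF DERIV_cmult[OF DERIV_ident, of "real (n + m)" x ?S]] by (simp only: mult_1_right)
      from DERIV_cmult[OF DERIV_chain2[OF DERIV_exp this], of "\<beta> n"] show ?thesis
        by (rule DERIV_cong) (simp add: algebra_simps)
    qed
    show "uniformly_convergent_on ?S (\<lambda>n x. \<Sum>i<n. ?f' i x)"
    proof (rule Weierstrass_m_test')
      fix n x assume x: "x \<in> ?S"
      have "\<bar>((real n + real m) * \<beta> n) * exp (- (real (n + m) * x))\<bar> \<le>
          exp (- (real m * (u - 1))) * (\<bar>(real n + real m) * \<beta> n\<bar> * exp (- (u - 1)) ^ n)"
        by (rule ser_term_bound[where \<beta>="\<lambda>k. (real k + real m) * \<beta> k" and k=n and m=m and u=x and v="u-1"]) (use x in simp)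
      then show "norm (?f' n x) \<le> exp (- (real m * (u - 1))) * (\<bar>(real n + real m) * \<beta> n\<bar> * exp (- (u - 1)) ^ n)"
        by (simp add: abs_mult ac_simps)
    next
      show "summable (\<lambda>n. exp (- (real m * (u - 1))) * (\<bar>(real n + real m) * \<beta> n\<bar> * exp (- (u - 1)) ^ n))"
        using ent unfolding entire_def by (intro summable_mult) (drule spec[of _ "exp (- (u - 1))"], simp only: exp_ge_zero simp_thms)
    qed
    show "u \<in> ?S" by simp
    show "summable (\<lambda>n. ?f n u)" by (rule ser_summable[OF assms])
    show "u \<in> interior ?S" by simp
  qed
  have e1: "ser \<beta> m = (\<lambda>v. \<Sum>n. ?f n v)" by (rule ext) (simp add: ser_def)
  have e2: "ser (\<lambda>k. - (real (k + m)) * \<beta> k) m u = (\<Sum>n. ?f' n u)" by (simp add: ser_def)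
  show ?thesis unfolding e1 e2 by (rule D)
qed

lemma ser_cont: "entire \<beta> \<Longrightarrow> continuous_on A (ser \<beta> m)"
  by (intro continuous_at_imp_continuous_on ballI DERIV_isCont[OF ser_deriv])

lemma ser_borel: "entire \<beta> \<Longrightarrow> ser \<beta> m \<in> borel_measurable borel"
  using ser_cont borel_measurable_continuous_onI by blast

lemma ser_lim:
  assumes "entire \<beta>" "m \<ge> 1"
  shows "(ser \<beta> m \<longlongrightarrow> 0) at_top"
proof (rule Lim_null_comparison)
  let ?B = "(\<Sum>k. \<bar>\<beta> k\<bar> * 1 ^ k)"
  show "\<forall>\<^sub>F u in at_top. norm (ser \<beta> m u) \<le> exp (- (real m * u)) * ?B"
    unfolding eventually_at_top_linorder
  proof (intro exI[of _ 0] allI impI)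
    fix u :: real assume u: "u \<ge> 0"
    have s1: "summable (\<lambda>k. \<bar>\<beta> k\<bar> * 1 ^ k)"
      using assms(1) unfolding entire_def by (drule_tac spec[of _ 1]) simp
    have sB: "summable (\<lambda>k. exp (- (real m * u)) * (\<bar>\<beta> k\<bar> * exp (- 0) ^ k))"
      using s1 by (intro summable_mult) simp
    have "norm (ser \<beta> m u) \<le> (\<Sum>k. \<bar>\<beta> k * exp (- (real (k + m) * u))\<bar>)"
      unfolding ser_def using ser_summable_abs[OF assms(1)] by (simp add: summable_rabs)
    also have "\<dots> \<le> (\<Sum>k. exp (- (real m * u)) * (\<bar>\<beta> k\<bar> * exp (- 0) ^ k))"
    proof (intro suminf_le allI)
      fix k
      have "exp (- (real (k + m) * u)) \<le> exp (- (real m * u))"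
        using u by (simp add: algebra_simps)
      then show "\<bar>\<beta> k * exp (- (real (k + m) * u))\<bar> \<le> exp (- (real m * u)) * (\<bar>\<beta> k\<bar> * exp (- 0) ^ k)"
        by (simp add: abs_mult mult_left_mono mult.commute)
    next
      show "summable (\<lambda>k. \<bar>\<beta> k * exp (- (real (k + m) * u))\<bar>)" by (rule ser_summable_abs[OF assms(1)])
    next
      show "summable (\<lambda>k. exp (- (real m * u)) * (\<bar>\<beta> k\<bar> * exp (- 0) ^ k))" by (rule sB)
    qed
    also have "\<dots> = exp (- (real m * u)) * ?B"
      using suminf_mult[OF s1, of "exp (- (real m * u))"] by simp
    finally show "norm (ser \<beta> m u) \<le> exp (- (real m * u)) * ?B" .
  qed
  have "filterlim (\<lambda>u. real m * u) at_top at_top"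
    using assms(2) by (intro filterlim_tendsto_pos_mult_at_top[OF tendsto_const]) (auto simp: filterlim_ident)
  then have "filterlim (\<lambda>u. - (real m * u)) at_bot at_top"
    by (simp add: filterlim_uminus_at_top)
  then have "((\<lambda>u. exp (- (real m * u))) \<longlongrightarrow> 0) at_top" by (rule filterlim_compose[OF exp_at_bot])
  then show "((\<lambda>u. exp (- (real m * u)) * ?B) \<longlongrightarrow> 0) at_top"
    by (rule tendsto_mult_left_zero)
qed


definition bb :: "nat \<Rightarrow> real" where "bb k = (-1)^k / (fact k * fact (k+2))"
definition aa :: "nat \<Rightarrow> real" where "aa k = (-1)^k / (fact k * fact (k+1))"
definition CC :: real where "CC = 1 / (2 * (\<Sum>k. bb k))"
definition Gf :: "real \<Rightarrow> real" where "Gf u = CC * ser bb 2 u"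
definition rhos :: "real \<Rightarrow> real" where "rhos u = CC * ser aa 2 u"

lemma fact_ge1: "(1::real) \<le> fact n" by simp

lemma abs_bb: "\<bar>bb k\<bar> = 1 / (fact k * fact (k+2))"
  by (simp add: bb_def abs_mult)

lemma abs_aa: "\<bar>aa k\<bar> = 1 / (fact k * fact (k+1))"
  by (simp add: aa_def abs_mult)

lemma inv_fact_prod_le: "1 / (fact k * fact j) \<le> (1::real) / fact k"
proof -
  have "fact k * 1 \<le> (fact k :: real) * fact j" by (intro mult_left_mono) auto
  then show ?thesis by (intro divide_left_mono) auto
qed

lemma entire_bb: "entire bb"
  by (rule entire_fact) (simp only: abs_bb inv_fact_prod_le)

lemma entire_aa: "entire aa"
  by (rule entire_fact) (simp only: abs_aa inv_fact_prod_le)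

lemma entire_bb_Suc: "entire (\<lambda>k. bb (Suc k))"
proof (rule entire_fact)
  fix k
  have "\<bar>bb (Suc k)\<bar> \<le> 1 / fact (Suc k)" by (simp only: abs_bb inv_fact_prod_le)
  also have "\<dots> \<le> 1 / fact k" by (intro divide_left_mono) (auto intro: fact_mono)
  finally show "\<bar>bb (Suc k)\<bar> \<le> 1 / fact k" .
qed

lemma aa_bb: "- (real (k + 2)) * bb k = - aa k"
proof -
  have e: "(fact (k+2)::real) = (real k + 2) * fact (k+1)" by (simp add: algebra_simps)
  have "bb k = (-1)^k / (fact k * ((real k + 2) * fact (k+1)))" unfolding bb_def e ..
  have c: "real k + 2 \<noteq> 0" by simp
  have "real (k+2) * bb k = ((real k + 2) * (-1)^k) / ((real k + 2) * (fact k * fact (k+1)))"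
    unfolding \<open>bb k = _\<close> by (simp add: ac_simps del: fact_Suc)
  also have "\<dots> = aa k" unfolding aa_def using c by (rule mult_divide_mult_cancel_left)
  finally have r: "real (k+2) * bb k = aa k" .
  show ?thesis using r by (metis mult_minus_left)
qed

lemma bb_Suc: "bb (Suc k) = - bb k / ((real k + 1) * (real k + 3))"
proof -
  have f1: "fact (Suc k) = (real k + 1) * (fact k :: real)" by (simp add: algebra_simps)
  have f2: "fact (Suc k + 2) = (real k + 3) * (fact (k+2) :: real)"
    by (simp add: algebra_simps)
  show ?thesis unfolding bb_def f1 f2 by (simp add: field_simps)
qed

lemma bb_diff: "bb k / (real k + 1) - bb k / (real k + 3) = -2 * bb (Suc k)"
  unfolding bb_Suc by (simp add: field_simps)

lemma bb0: "bb 0 = 1/2" by (simp add: bb_def)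

lemma leibniz_pos:
  fixes a :: "nat \<Rightarrow> real"
  assumes a0: "a \<longlonglongrightarrow> 0" and pos: "\<And>n. 0 \<le> a n" and mono: "\<And>n. a (Suc n) \<le> a n"
  shows "0 \<le> (\<Sum>i. (-1)^i * a i)" and "a 0 - a 1 \<le> (\<Sum>i. (-1)^i * a i)"
proof -
  show "0 \<le> (\<Sum>i. (-1)^i * a i)"
    using summable_Leibniz'(2)[OF a0 pos mono, of 0] by simp
  show "a 0 - a 1 \<le> (\<Sum>i. (-1)^i * a i)"
    using summable_Leibniz'(2)[OF a0 pos mono, of 1] by (simp add: numeral_2_eq_2)
qed

lemma inv_Suc_lim: "(\<lambda>n. 1 / (real n + 1)) \<longlonglongrightarrow> 0"
  using LIMSEQ_inverse_real_of_nat by (simp add: inverse_eq_divide add.commute)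

lemma sandwich0:
  fixes a :: "nat \<Rightarrow> real"
  assumes "\<And>n. 0 \<le> a n" "\<And>n. a n \<le> 1 / (real n + 1)"
  shows "a \<longlonglongrightarrow> 0"
  by (rule tendsto_sandwich[OF _ _ tendsto_const inv_Suc_lim]) (use assms in auto)

lemma fact_ge_n1: "real n + 1 \<le> fact (Suc n)"
proof -
  have "(real n + 1) * 1 \<le> (real n + 1) * fact n" by (intro mult_left_mono) auto
  then show ?thesis by (simp add: algebra_simps)
qed

lemma sum_bb_pos: "(\<Sum>k. bb k) > 0"
proof -
  define a where "a k = 1 / (fact k * fact (k+2) :: real)" for k
  have bba: "bb k = (-1)^k * a k" for k unfolding a_def bb_def by simp
  have pos: "0 \<le> a n" for n unfolding a_def by simp
  have mono: "a (Suc n) \<le> a n" for n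
  proof -
    have "fact n * fact (n+2) \<le> (fact (Suc n) * fact (Suc n + 2) :: real)"
      by (intro mult_mono fact_mono) auto
    then show ?thesis unfolding a_def by (intro divide_left_mono) auto
  qed
  have le: "a n \<le> 1 / (real n + 1)" for n
  proof -
    have "(fact (Suc n)::real) \<le> fact (n+2)" by (rule fact_mono) simp
    then have "real n + 1 \<le> fact (n+2)" using fact_ge_n1[of n] by linarith
    also have "\<dots> \<le> fact n * fact (n+2)" using mult_right_mono[OF fact_ge1[of n], of "fact (n+2)"] by simp
    finally show ?thesis unfolding a_def by (intro divide_left_mono) auto
  qed
  have "a 0 - a 1 \<le> (\<Sum>i. (-1)^i * a i)"
    by (rule leibniz_pos(2)[OF sandwich0[OF pos le] pos mono])
  moreover have "a 0 - a 1 = 1/3" unfolding a_def by (simp add: numeral_3_eq_3)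
  ultimately show ?thesis unfolding bba by simp
qed

lemma CC_pos: "CC > 0"
  unfolding CC_def using sum_bb_pos by simp

lemma ser_aa_nonneg:
  assumes u: "u \<ge> 0"
  shows "ser aa 2 u \<ge> 0"
proof -
  define q where "q = exp (-u)"
  have q0: "0 < q" and q1: "q \<le> 1" unfolding q_def using u by auto
  define a where "a k = q^(k+2) / (fact k * fact (k+1))" for k
  have eq: "aa k * exp (- (real (k + 2) * u)) = (-1)^k * a k" for k
    unfolding a_def aa_def q_def exp_nat_pow[symmetric] by simp
  have pos: "0 \<le> a n" for n unfolding a_def using q0 by simp
  have mono: "a (Suc n) \<le> a n" for n
  proof -
    have "q^(Suc n + 2) \<le> q^(n+2)" using q0 q1 by (intro power_decreasing) auto
    moreover have "fact n * fact (n+1) \<le> (fact (Suc n) * fact (Suc n + 1) :: real)"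
      by (intro mult_mono fact_mono) auto
    ultimately show ?thesis unfolding a_def using q0
      by (intro frac_le) auto
  qed
  have le: "a n \<le> 1 / (real n + 1)" for n
  proof -
    have "q^(n+2) \<le> 1" by (rule power_le_one) (use q0 q1 in auto)
    moreover have "real n + 1 \<le> fact n * fact (n+1)"
    proof -
      have "real n + 1 \<le> fact (n+1)" using fact_ge_n1[of n] by simp
      also have "\<dots> \<le> fact n * fact (n+1)" using mult_right_mono[OF fact_ge1[of n], of "fact (n+1)"] by simp
      finally show ?thesis .
    qed
    ultimately show ?thesis unfolding a_def using q0
      by (intro frac_le) auto
  qed
  have "0 \<le> (\<Sum>i. (-1)^i * a i)"
    by (rule leibniz_pos(1)[OF sandwich0[OF pos le] pos mono])
  then show ?thesis unfolding ser_def eq .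
qed

lemma rhos_nonneg: "u \<ge> 0 \<Longrightarrow> rhos u \<ge> 0"
  unfolding rhos_def using CC_pos ser_aa_nonneg by simp

lemma Gf_deriv: "(Gf has_real_derivative - rhos u) (at u)"
proof -
  have "((\<lambda>u. CC * ser bb 2 u) has_real_derivative CC * ser (\<lambda>k. - (real (k + 2)) * bb k) 2 u) (at u)"
    by (rule DERIV_cmult[OF ser_deriv[OF entire_bb]])
  moreover have "ser (\<lambda>k. - (real (k + 2)) * bb k) 2 u = - ser aa 2 u"
    unfolding aa_bb using ser_cmult[OF entire_aa, of "-1" 2 u] by simp
  ultimately show ?thesis unfolding Gf_def rhos_def
    by (metis (no_types, lifting) ext mult_minus_right)
qed

lemma Gf_lim: "(Gf \<longlongrightarrow> 0) at_top"
  unfolding Gf_def using tendsto_mult_right_zero[OF ser_lim[OF entire_bb, of 2]] by simp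

lemma Gf0: "Gf 0 = 1/2"
  unfolding Gf_def ser_zero CC_def using sum_bb_pos by simp

lemma Gf_mono: "0 \<le> a \<Longrightarrow> a \<le> b \<Longrightarrow> Gf b \<le> Gf a"
  by (rule DERIV_nonpos_imp_nonincreasing) (use Gf_deriv rhos_nonneg in \<open>fastforce\<close>)+

lemma Gf_nonneg: "0 \<le> a \<Longrightarrow> 0 \<le> Gf a"
proof -
  assume a: "0 \<le> a"
  have ev: "\<forall>\<^sub>F b in at_top. Gf b \<le> Gf a"
    unfolding eventually_at_top_linorder using Gf_mono[OF a] by blast
  show "0 \<le> Gf a"
    by (rule tendsto_le[OF trivial_limit_at_top_linorder tendsto_const Gf_lim ev])
qed

lemma Gf_le: "0 \<le> a \<Longrightarrow> Gf a \<le> 1/2"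
  using Gf_mono[of 0 a] Gf0 by simp

lemma rho_inf_eq: "rho_inf d = rhos \<bar>d\<bar>"
proof -
  define y where "y = exp (- (1/2) * \<bar>d\<bar>)"
  have y0: "y > 0" unfolding y_def by simp
  have yy: "y^2 = exp (- \<bar>d\<bar>)" unfolding y_def using exp_nat_pow[of 2 "\<bar>d\<bar>/2"] by simp
  have y3: "exp (- (3/2) * \<bar>d\<bar>) = y^3" unfolding y_def using exp_nat_pow[of 3 "\<bar>d\<bar>/2"] by simp
  have tm: "aa k * exp (- (real (k + 2) * \<bar>d\<bar>)) = y^3 * ((-1) ^ k / (fact k * fact (k + 1)) * (2 * y / 2) ^ (2 * k + 1))" for k
  proof -
    have "exp (- (real (k + 2) * \<bar>d\<bar>)) = (y^2)^(k+2)" unfolding yy exp_nat_pow ..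
    also have "\<dots> = y^(2*(k+2))" by (simp only: power_mult)
    also have "2*(k+2) = 3 + (2*k+1)" by simp
    also have "y^(3 + (2*k+1)) = y^3 * y^(2*k+1)" by (rule power_add)
    finally show ?thesis unfolding aa_def by simp
  qed
  have sm: "summable (\<lambda>k. (-1) ^ k / (fact k * fact (k + 1)) * (2 * y / 2) ^ (2 * k + 1))"
  proof -
    have "summable (\<lambda>k. (1 / y^3) * (aa k * exp (- (real (k + 2) * \<bar>d\<bar>))))"
      by (intro summable_mult ser_summable[OF entire_aa])
    then show ?thesis unfolding tm using y0 by simp
  qed
  have s1: "ser aa 2 \<bar>d\<bar> = y^3 * bessel_J 1 (2 * y)"
    unfolding ser_def tm bessel_J_def using suminf_mult[OF sm, of "y^3"] by simp
  have s2: "bessel_J 2 2 = (\<Sum>k. bb k)"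
    unfolding bessel_J_def bb_def by simp
  have r: "rho_inf d = 1/(2*bessel_J 2 2) * y^3 * bessel_J 1 (2*y)"
    unfolding rho_inf_def y3[unfolded y_def] y_def by (rule refl)
  show ?thesis
    unfolding r rhos_def CC_def s1 s2 by (simp add: mult.assoc)
qed


lemma ftc_ici:
  fixes f F :: "real \<Rightarrow> real"
  assumes fb: "f \<in> borel_measurable borel"
    and d: "\<And>x. a \<le> x \<Longrightarrow> (F has_real_derivative f x) (at x)"
    and nn: "\<And>x. a \<le> x \<Longrightarrow> 0 \<le> f x"
    and lim: "(F \<longlongrightarrow> T) at_top"
  shows "(\<integral>\<^sup>+x. ennreal (f x) * indicator {a..} x \<partial>lborel) = ennreal (T - F a)"
    and "F a \<le> T"
proof -
  show "(\<integral>\<^sup>+x. ennreal (f x) * indicator {a..} x \<partial>lborel) = ennreal (T - F a)"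
    using nn_integral_FTC_atLeast[OF fb d nn lim] by simp
  have mono: "F a \<le> F b" if "a \<le> b" for b
    by (rule DERIV_nonneg_imp_nondecreasing[OF that]) (use d nn in \<open>fastforce\<close>)
  have ev: "\<forall>\<^sub>F b in at_top. F a \<le> F b"
    unfolding eventually_at_top_linorder using mono by blast
  show "F a \<le> T"
    by (rule tendsto_le[OF trivial_limit_at_top_linorder lim tendsto_const ev])
qed

lemma ftc_icc:
  fixes f F :: "real \<Rightarrow> real"
  assumes ab: "a \<le> b"
    and d: "\<And>x. a \<le> x \<Longrightarrow> x \<le> b \<Longrightarrow> (F has_real_derivative f x) (at x)"
    and nn: "\<And>x. a \<le> x \<Longrightarrow> x \<le> b \<Longrightarrow> 0 \<le> f x"
  shows "(\<integral>\<^sup>+x. ennreal (f x) * indicator {a..b} x \<partial>lborel) = ennreal (F b - F a)"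
    and "F a \<le> F b"
proof -
  have "(f has_integral F b - F a) {a..b}"
  proof (rule fundamental_theorem_of_calculus[OF ab])
    fix x assume "x \<in> {a..b}"
    then have "(F has_real_derivative f x) (at x within {a..b})"
      using d by (auto intro: DERIV_subset)
    then show "(F has_vector_derivative f x) (at x within {a..b})"
      by (simp add: has_real_derivative_iff_has_vector_derivative)
  qed
  from nn_integral_has_integral_lebesgue[OF _ this] nn
  have "(\<integral>\<^sup>+x. ennreal (indicator {a..b} x * f x) \<partial>lborel) = ennreal (F b - F a)" by auto
  moreover have "\<And>x. ennreal (f x) * indicator {a..b} x = ennreal (indicator {a..b} x * f x)"
    by (simp split: split_indicator)
  ultimately show "(\<integral>\<^sup>+x. ennreal (f x) * indicator {a..b} x \<partial>lborel) = ennreal (F b - F a)"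
    by simp
  show "F a \<le> F b"
    by (rule DERIV_nonneg_imp_nondecreasing[OF ab]) (use d nn in \<open>fastforce\<close>)
qed

lemma rhos_borel: "rhos \<in> borel_measurable borel"
  unfolding rhos_def using ser_borel[OF entire_aa] by measurable

lemma Gf_borel: "Gf \<in> borel_measurable borel"
  unfolding Gf_def using ser_borel[OF entire_bb] by measurable

lemma Gf_cont: "continuous_on A Gf"
  unfolding Gf_def by (intro continuous_intros ser_cont[OF entire_bb])

lemma int_rhos_ici:
  assumes t: "0 \<le> t"
  shows "(\<integral>\<^sup>+u. ennreal (rhos u) * indicator {t..} u \<partial>lborel) = ennreal (Gf t)"
proof -
  have "(\<integral>\<^sup>+u. ennreal (rhos u) * indicator {t..} u \<partial>lborel) = ennreal (0 - (- Gf t))"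
  proof (rule ftc_ici(1)[where F = "\<lambda>u. - Gf u"])
    show "rhos \<in> borel_measurable borel" by (rule rhos_borel)
    show "((\<lambda>u. - Gf u) has_real_derivative rhos x) (at x)" if "t \<le> x" for x
      using DERIV_minus[OF Gf_deriv[of x]] by simp
    show "0 \<le> rhos x" if "t \<le> x" for x using rhos_nonneg that t by simp
    show "((\<lambda>u. - Gf u) \<longlongrightarrow> 0) at_top" using tendsto_minus[OF Gf_lim] by simp
  qed
  then show ?thesis by simp
qed

definition b3 :: "nat \<Rightarrow> real" where "b3 k = bb k / (real k + 3)"
definition b1 :: "nat \<Rightarrow> real" where "b1 k = bb k / (real k + 1)"

lemma entire_b3: "entire b3"
  unfolding b3_def by (rule entire_div[OF entire_bb]) simp
lemma entire_b1: "entire b1"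
  unfolding b1_def by (rule entire_div[OF entire_bb]) simp

lemma ser_b3_deriv: "(ser b3 3 has_real_derivative - ser bb 3 u) (at u)"
proof -
  have c: "(\<lambda>k. - real (k + 3) * b3 k) = (\<lambda>k. -1 * bb k)"
    by (rule ext) (simp add: b3_def field_simps)
  show ?thesis using ser_deriv[OF entire_b3, of 3 u] unfolding c ser_cmult[OF entire_bb] by simp
qed

lemma ser_b1_deriv: "(ser b1 1 has_real_derivative - ser bb 1 u) (at u)"
proof -
  have c: "(\<lambda>k. - real (k + 1) * b1 k) = (\<lambda>k. -1 * bb k)"
    by (rule ext) (simp add: b1_def field_simps)
  show ?thesis using ser_deriv[OF entire_b1, of 1 u] unfolding c ser_cmult[OF entire_bb] by simp
qed

lemma ser3: "ser \<beta> 3 u = exp (-u) * ser \<beta> 2 u" if "entire \<beta>"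
  using ser_shift[OF that, of 2 u] by (simp add: numeral_3_eq_3)

lemma ser2: "ser \<beta> 2 u = exp (-u) * ser \<beta> 1 u" if "entire \<beta>"
  using ser_shift[OF that, of 1 u] by (simp add: numeral_2_eq_2)

lemma int_G_exp:
  "(\<integral>\<^sup>+v. ennreal (Gf v * exp (-v)) * indicator {0..} v \<partial>lborel) = ennreal (CC * (\<Sum>k. b3 k))"
proof -
  have "(\<integral>\<^sup>+v. ennreal (Gf v * exp (-v)) * indicator {0..} v \<partial>lborel) =
      ennreal (0 - (- (CC * ser b3 3 0)))"
  proof (rule ftc_ici(1)[where F = "\<lambda>v. - (CC * ser b3 3 v)"])
    show "(\<lambda>v. Gf v * exp (-v)) \<in> borel_measurable borel" using Gf_borel by measurable
    show "((\<lambda>v. - (CC * ser b3 3 v)) has_real_derivative Gf x * exp (- x)) (at x)" for x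
    proof -
      have "((\<lambda>v. - (CC * ser b3 3 v)) has_real_derivative - (CC * - ser bb 3 x)) (at x)"
        by (intro DERIV_minus DERIV_cmult ser_b3_deriv)
      moreover have "- (CC * - ser bb 3 x) = Gf x * exp (- x)"
        unfolding Gf_def ser3[OF entire_bb] by simp
      ultimately show ?thesis by simp
    qed
    show "0 \<le> Gf x * exp (- x)" if "0 \<le> x" for x using Gf_nonneg[OF that] by simp
    show "((\<lambda>v. - (CC * ser b3 3 v)) \<longlongrightarrow> 0) at_top"
      using tendsto_minus[OF tendsto_mult_right_zero[OF ser_lim[OF entire_b3, of 3]], of CC] by simp
  qed
  then show ?thesis unfolding ser_zero by simp
qed

lemma int_G_exp_nonneg: "0 \<le> CC * (\<Sum>k. b3 k)"
proof -
  have "- (CC * ser b3 3 0) \<le> 0"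
  proof (rule ftc_ici(2)[where F = "\<lambda>v. - (CC * ser b3 3 v)" and f = "\<lambda>v. Gf v * exp (-v)" and a = 0])
    show "(\<lambda>v. Gf v * exp (-v)) \<in> borel_measurable borel" using Gf_borel by measurable
    show "((\<lambda>v. - (CC * ser b3 3 v)) has_real_derivative Gf x * exp (- x)) (at x)" for x
    proof -
      have "((\<lambda>v. - (CC * ser b3 3 v)) has_real_derivative - (CC * - ser bb 3 x)) (at x)"
        by (intro DERIV_minus DERIV_cmult ser_b3_deriv)
      moreover have "- (CC * - ser bb 3 x) = Gf x * exp (- x)"
        unfolding Gf_def ser3[OF entire_bb] by simp
      ultimately show ?thesis by simp
    qed
    show "0 \<le> Gf x * exp (- x)" if "0 \<le> x" for x using Gf_nonneg[OF that] by simp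
    show "((\<lambda>v. - (CC * ser b3 3 v)) \<longlongrightarrow> 0) at_top"
      using tendsto_minus[OF tendsto_mult_right_zero[OF ser_lim[OF entire_b3, of 3]], of CC] by simp
  qed
  then show ?thesis unfolding ser_zero by simp
qed

definition H2 :: "real \<Rightarrow> real \<Rightarrow> real" where
  "H2 t u = exp (u - t) + CC * exp (-t) * ser b1 1 u"

lemma int_mid:
  assumes t: "0 \<le> t"
  shows "(\<integral>\<^sup>+u. ennreal ((1 - Gf u) * exp (u - t)) * indicator {0..t} u \<partial>lborel) = ennreal (H2 t t - H2 t 0)"
    and "H2 t 0 \<le> H2 t t"
proof -
  have d: "(H2 t has_real_derivative (1 - Gf x) * exp (x - t)) (at x)" for x
  proof -
    have "(H2 t has_real_derivative exp (x - t) * (1 - 0) + CC * exp (-t) * - ser bb 1 x) (at x)"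
      unfolding H2_def[abs_def]
      by (intro DERIV_add DERIV_cmult ser_b1_deriv DERIV_chain2[OF DERIV_exp] DERIV_diff DERIV_ident DERIV_const)
    moreover have "exp (x - t) * (1 - 0) + CC * exp (-t) * - ser bb 1 x = (1 - Gf x) * exp (x - t)"
    proof -
      have "exp (-t) = exp (x - t) * exp (- x)" by (simp add: exp_add[symmetric])
      then show ?thesis unfolding Gf_def ser2[OF entire_bb] by (simp add: algebra_simps)
    qed
    ultimately show ?thesis by simp
  qed
  have nn: "0 \<le> (1 - Gf x) * exp (x - t)" if "0 \<le> x" for x
    using Gf_le[OF that] by simp
  show "(\<integral>\<^sup>+u. ennreal ((1 - Gf u) * exp (u - t)) * indicator {0..t} u \<partial>lborel) = ennreal (H2 t t - H2 t 0)"
    by (rule ftc_icc(1)[OF t d nn]) auto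
  show "H2 t 0 \<le> H2 t t"
    by (rule ftc_icc(2)[OF t d nn]) auto
qed

lemma int_right:
  assumes t: "0 \<le> t"
  shows "(\<integral>\<^sup>+u. ennreal ((1 - Gf u) * exp (t - u)) * indicator {t..} u \<partial>lborel) =
      ennreal (1 - CC * exp t * ser b3 3 t)"
    and "CC * exp t * ser b3 3 t \<le> 1"
proof -
  define H3 where "H3 u = exp t * (- exp (-u) + CC * ser b3 3 u)" for u
  have d: "(H3 has_real_derivative (1 - Gf x) * exp (t - x)) (at x)" for x
  proof -
    have "(H3 has_real_derivative exp t * (- (exp (-x) * - 1) + CC * - ser bb 3 x)) (at x)"
      unfolding H3_def[abs_def]
      by (intro DERIV_add DERIV_cmult ser_b3_deriv DERIV_minus DERIV_chain2[OF DERIV_exp] DERIV_ident)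
    moreover have "exp t * (- (exp (-x) * - 1) + CC * - ser bb 3 x) = (1 - Gf x) * exp (t - x)"
    proof -
      have "exp (t - x) = exp t * exp (- x)" by (simp add: exp_add[symmetric])
      then show ?thesis unfolding Gf_def ser3[OF entire_bb] by (simp add: algebra_simps)
    qed
    ultimately show ?thesis by simp
  qed
  have nn: "0 \<le> (1 - Gf x) * exp (t - x)" if "t \<le> x" for x
    using Gf_le[of x] that t by simp
  have lim: "(H3 \<longlongrightarrow> 0) at_top"
  proof -
    have "((\<lambda>u::real. exp (- u)) \<longlongrightarrow> 0) at_top"
      using filterlim_compose[OF exp_at_bot filterlim_uminus_at_bot_at_top] by simp
    then have "((\<lambda>u. - exp (-u) + CC * ser b3 3 u) \<longlongrightarrow> - 0 + CC * 0) at_top"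
      by (intro tendsto_intros ser_lim[OF entire_b3]) auto
    then show ?thesis unfolding H3_def using tendsto_mult_right_zero by fastforce
  qed
  have H3t: "H3 t = - 1 + CC * exp t * ser b3 3 t"
    unfolding H3_def by (simp add: algebra_simps exp_minus_inverse)
  show "(\<integral>\<^sup>+u. ennreal ((1 - Gf u) * exp (t - u)) * indicator {t..} u \<partial>lborel) =
      ennreal (1 - CC * exp t * ser b3 3 t)"
    using ftc_ici(1)[where f = "\<lambda>u. (1 - Gf u) * exp (t - u)" and a = t, OF _ d nn lim] Gf_borel
    unfolding H3t by (simp add: measurable_compose_rev)
  show "CC * exp t * ser b3 3 t \<le> 1"
    using ftc_ici(2)[where f = "\<lambda>u. (1 - Gf u) * exp (t - u)" and a = t, OF _ d nn lim] Gf_borel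
    unfolding H3t by (simp add: measurable_compose_rev)
qed


abbreviation "mur \<equiv> density lborel (\<lambda>d. ennreal (rho_inf d))"

definition Fx :: "real \<Rightarrow> real" where
  "Fx u = (if u < 0 then Gf (- u) else 1 - Gf u)"

lemma rho_inf_borel[measurable]: "rho_inf \<in> borel_measurable borel"
  unfolding rho_inf_eq[abs_def] using rhos_borel by measurable

lemma rho_inf_nonneg: "0 \<le> rho_inf d"
  unfolding rho_inf_eq by (rule rhos_nonneg) simp

lemma rho_inf_sym: "rho_inf (- d) = rho_inf d"
  unfolding rho_inf_eq by simp

lemma int_rho_ge:
  assumes "0 \<le> s"
  shows "(\<integral>\<^sup>+v. ennreal (rho_inf v) * indicator {s..} v \<partial>lborel) = ennreal (Gf s)"
proof -
  have "(\<integral>\<^sup>+v. ennreal (rho_inf v) * indicator {s..} v \<partial>lborel) =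
      (\<integral>\<^sup>+v. ennreal (rhos v) * indicator {s..} v \<partial>lborel)"
    using assms by (intro nn_integral_cong) (auto simp: rho_inf_eq split: split_indicator)
  also have "\<dots> = ennreal (Gf s)" by (rule int_rhos_ici[OF assms])
  finally show ?thesis .
qed

lemma reflect_nn:
  fixes f :: "real \<Rightarrow> ennreal"
  assumes [measurable]: "f \<in> borel_measurable borel"
  shows "(\<integral>\<^sup>+x. f x \<partial>lborel) = (\<integral>\<^sup>+x. f (- x) \<partial>lborel)"
  using nn_integral_real_affine[OF assms, of "-1" 0] by simp

lemma translate_nn:
  fixes f :: "real \<Rightarrow> ennreal"
  assumes [measurable]: "f \<in> borel_measurable borel"
  shows "(\<integral>\<^sup>+x. f x \<partial>lborel) = (\<integral>\<^sup>+x. f (t + x) \<partial>lborel)"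
  using nn_integral_real_affine[OF assms, of 1 t] by simp

lemma int_rho_le:
  assumes "0 \<le> s"
  shows "(\<integral>\<^sup>+v. ennreal (rho_inf v) * indicator {..-s} v \<partial>lborel) = ennreal (Gf s)"
proof -
  have "(\<integral>\<^sup>+v. ennreal (rho_inf v) * indicator {..-s} v \<partial>lborel) =
      (\<integral>\<^sup>+v. ennreal (rho_inf (-v)) * indicator {..-s} (-v) \<partial>lborel)"
    by (rule reflect_nn) measurable
  also have "\<dots> = (\<integral>\<^sup>+v. ennreal (rho_inf v) * indicator {s..} v \<partial>lborel)"
    by (intro nn_integral_cong) (auto simp: rho_inf_sym split: split_indicator)
  also have "\<dots> = ennreal (Gf s)" by (rule int_rho_ge[OF assms])
  finally show ?thesis .
qed

lemma int_rho_lt0: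
  "(\<integral>\<^sup>+v. ennreal (rho_inf v) * indicator {..<0} v \<partial>lborel) = ennreal (1/2)"
proof -
  have "(\<integral>\<^sup>+v. ennreal (rho_inf v) * indicator {..<0} v \<partial>lborel) =
      (\<integral>\<^sup>+v. ennreal (rho_inf v) * indicator {..-0} v \<partial>lborel)"
    by (intro nn_integral_cong_AE) (use AE_lborel_singleton[of 0] in \<open>auto elim!: eventually_mono split: split_indicator\<close>)
  also have "\<dots> = ennreal (Gf 0)" by (rule int_rho_le) simp
  finally show ?thesis by (simp add: Gf0)
qed

lemma int_rho_0t:
  assumes t: "0 \<le> t"
  shows "(\<integral>\<^sup>+v. ennreal (rho_inf v) * indicator {0..t} v \<partial>lborel) = ennreal (1/2 - Gf t)"
proof -
  have "(\<integral>\<^sup>+v. ennreal (rho_inf v) * indicator {0..t} v \<partial>lborel) =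
      (\<integral>\<^sup>+v. ennreal (rhos v) * indicator {0..t} v \<partial>lborel)"
    by (intro nn_integral_cong) (auto simp: rho_inf_eq split: split_indicator)
  also have "\<dots> = ennreal ((- Gf t) - (- Gf 0))"
  proof (rule ftc_icc(1)[OF t])
    show "((\<lambda>u. - Gf u) has_real_derivative rhos x) (at x)" for x
      using DERIV_minus[OF Gf_deriv[of x]] by simp
    show "0 \<le> rhos x" if "0 \<le> x" for x using rhos_nonneg that by simp
  qed
  finally show ?thesis by (simp add: Gf0)
qed

lemma emeasure_mur: "A \<in> sets borel \<Longrightarrow> emeasure mur A = (\<integral>\<^sup>+x. ennreal (rho_inf x) * indicator A x \<partial>lborel)"
  by (subst emeasure_density) auto

lemma mur_UNIV: "emeasure mur UNIV = 1"
proof -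
  have "emeasure mur UNIV = (\<integral>\<^sup>+x. ennreal (rho_inf x) * indicator {..<0} x + ennreal (rho_inf x) * indicator {0..} x \<partial>lborel)"
    by (subst emeasure_mur) (auto intro!: nn_integral_cong split: split_indicator)
  also have "\<dots> = ennreal (1/2) + ennreal (Gf 0)"
    by (subst nn_integral_add) (auto simp: int_rho_lt0 int_rho_ge)
  also have "\<dots> = ennreal (1/2 + 1/2)" unfolding Gf0 by (rule ennreal_plus[symmetric]) auto
  also have "\<dots> = 1" by simp
  finally show ?thesis .
qed

lemma prob_mur: "prob_space mur"
  by (rule prob_spaceI) (simp add: mur_UNIV)

lemma sets_mur: "sets mur = sets borel" by simp

lemma mur_le: "emeasure mur {..t} = ennreal (Fx t)"
proof (cases "t < 0")
  case True
  have "emeasure mur {..t} = (\<integral>\<^sup>+v. ennreal (rho_inf v) * indicator {..-(-t)} v \<partial>lborel)"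
    by (subst emeasure_mur) auto
  also have "\<dots> = ennreal (Gf (-t))" by (rule int_rho_le) (use True in simp)
  finally show ?thesis using True by (simp add: Fx_def)
next
  case False
  then have t: "0 \<le> t" by simp
  have "emeasure mur {..t} = (\<integral>\<^sup>+x. ennreal (rho_inf x) * indicator {..<0} x + ennreal (rho_inf x) * indicator {0..t} x \<partial>lborel)"
    using t by (subst emeasure_mur) (auto intro!: nn_integral_cong split: split_indicator)
  also have "\<dots> = ennreal (1/2) + ennreal (1/2 - Gf t)"
    by (subst nn_integral_add) (auto simp: int_rho_lt0 int_rho_0t[OF t])
  also have "\<dots> = ennreal (1 - Gf t)"
    using Gf_le[OF t] by (subst ennreal_plus[symmetric]) auto
  finally show ?thesis using t by (simp add: Fx_def)
qed

lemma Fx_sym: "Fx (- u) = 1 - Fx u"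
  by (auto simp: Fx_def Gf0)

lemma Fx_range: "0 \<le> Fx u \<and> Fx u \<le> 1"
  unfolding Fx_def using Gf_nonneg[of "-u"] Gf_le[of "-u"] Gf_nonneg[of u] Gf_le[of u] by auto

lemma Fx_borel[measurable]: "Fx \<in> borel_measurable borel"
  unfolding Fx_def[abs_def] using Gf_borel by measurable


lemma prob_E: "prob_space std_exp"
  unfolding std_exp_def by (rule prob_space_exponential_density) simp

lemma sets_E[measurable_cong, simp]: "sets std_exp = sets borel"
  unfolding std_exp_def by simp

lemma space_E[simp]: "space std_exp = UNIV"
  using sets_eq_imp_space_eq[OF sets_E] by simp

lemma nn_E: "f \<in> borel_measurable borel \<Longrightarrow>
   (\<integral>\<^sup>+x. f x \<partial>std_exp) = (\<integral>\<^sup>+x. ennreal (exponential_density 1 x) * f x \<partial>lborel)"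
  unfolding std_exp_def by (subst nn_integral_density) auto

lemma E_ge:
  assumes a: "0 \<le> a"
  shows "emeasure std_exp {a..} = ennreal (exp (-a))"
proof -
  have "emeasure std_exp {a..} = (\<integral>\<^sup>+x. ennreal (exp (-x)) * indicator {a..} x \<partial>lborel)"
    unfolding std_exp_def using a
    by (subst emeasure_density) (auto intro!: nn_integral_cong simp: exponential_density_def split: split_indicator)
  also have "\<dots> = ennreal (0 - (- exp (-a)))"
  proof (rule ftc_ici(1))
    show "((\<lambda>x. - exp (- x)) has_real_derivative exp (- x)) (at x)" for x
      using DERIV_minus[OF DERIV_chain2[OF DERIV_exp DERIV_minus[OF DERIV_ident]]] by simp
    show "((\<lambda>x::real. - exp (- x)) \<longlongrightarrow> 0) at_top"
      using tendsto_minus[OF filterlim_compose[OF exp_at_bot filterlim_uminus_at_bot_at_top]] by simp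
  qed auto
  finally show ?thesis by simp
qed

lemma E_gt:
  assumes a: "0 \<le> a"
  shows "emeasure std_exp {a<..} = ennreal (exp (-a))"
proof -
  have "emeasure std_exp {a<..} = emeasure std_exp {a..}"
    unfolding std_exp_def
    by (simp add: emeasure_density, intro nn_integral_cong_AE)
       (use AE_lborel_singleton[of a] in \<open>auto elim!: eventually_mono split: split_indicator\<close>)
  then show ?thesis using E_ge[OF a] by simp
qed

lemma E_le:
  assumes a: "0 \<le> a"
  shows "emeasure std_exp {..a} = ennreal (1 - exp (-a))"
proof -
  interpret E: prob_space std_exp by (rule prob_E)
  have "E.prob {..a} = 1 - E.prob {a<..}"
    using E.prob_compl[of "{a<..}"] by (simp add: Compl_eq_Diff_UNIV[symmetric] not_less)
  moreover have "E.prob {a<..} = exp (-a)" using E_gt[OF a] by (simp add: E.emeasure_eq_measure)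
  ultimately show ?thesis by (simp add: E.emeasure_eq_measure)
qed

lemma inner_exp:
  "(\<integral>\<^sup>+x. ennreal (exponential_density 1 x) * ennreal (exponential_density 1 (x - s)) \<partial>lborel)
     = ennreal (exp (- \<bar>s\<bar>) / 2)"
proof -
  define m where "m = max 0 s"
  have m0: "0 \<le> m" unfolding m_def by simp
  have "(\<integral>\<^sup>+x. ennreal (exponential_density 1 x) * ennreal (exponential_density 1 (x - s)) \<partial>lborel)
      = (\<integral>\<^sup>+x. ennreal (exp s * exp (- 2 * x)) * indicator {m..} x \<partial>lborel)"
  proof (intro nn_integral_cong)
    fix x :: real
    show "ennreal (exponential_density 1 x) * ennreal (exponential_density 1 (x - s)) =
        ennreal (exp s * exp (- 2 * x)) * indicator {m..} x"
      unfolding m_def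
      by (auto simp: exponential_density_def ennreal_mult'[symmetric] exp_add[symmetric] split: split_indicator)
  qed
  also have "\<dots> = ennreal (0 - (- (exp s * exp (- 2 * m) / 2)))"
  proof (rule ftc_ici(1))
    show "((\<lambda>x. - (exp s * exp (- 2 * x) / 2)) has_real_derivative exp s * exp (- 2 * x)) (at x)" for x
    proof -
      have "((\<lambda>x. - (exp s * exp (- 2 * x) / 2)) has_real_derivative - (exp s * (exp (- 2 * x) * (- 2 * 1)) / 2)) (at x)"
        by (intro DERIV_minus DERIV_cdivide DERIV_cmult DERIV_chain2[OF DERIV_exp] DERIV_cmult DERIV_ident)
      then show ?thesis by simp
    qed
    have "((\<lambda>x::real. exp (- 2 * x)) \<longlongrightarrow> 0) at_top"
    proof -
      have "filterlim (\<lambda>x::real. 2 * x) at_top at_top"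
        by (intro filterlim_tendsto_pos_mult_at_top[OF tendsto_const]) (auto simp: filterlim_ident)
      then have "filterlim (\<lambda>x::real. - (2 * x)) at_bot at_top"
        by (simp add: filterlim_uminus_at_top)
      from filterlim_compose[OF exp_at_bot this] show ?thesis by simp
    qed
    from tendsto_mult_right_zero[OF this, of "exp s"]
    have "((\<lambda>x::real. exp s * exp (- 2 * x)) \<longlongrightarrow> 0) at_top" .
    from tendsto_minus[OF tendsto_divide_zero[OF this, of 2]]
    show "((\<lambda>x. - (exp s * exp (- 2 * x) / 2)) \<longlongrightarrow> 0) at_top" by simp
  qed (auto intro: m0)
  also have "exp s * exp (- 2 * m) = exp (- \<bar>s\<bar>)"
    unfolding m_def by (auto simp: exp_add[symmetric] max_def abs_if)
  finally show ?thesis by simp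
qed

lemma laplace:
  fixes f :: "real \<Rightarrow> ennreal"
  assumes [measurable]: "f \<in> borel_measurable borel"
  shows "(\<integral>\<^sup>+x. \<integral>\<^sup>+y. f (x - y) \<partial>std_exp \<partial>std_exp) = (\<integral>\<^sup>+s. f s * ennreal (exp (- \<bar>s\<bar>) / 2) \<partial>lborel)"
proof -
  let ?e = "\<lambda>x. ennreal (exponential_density 1 x)"
  have [measurable]: "(\<lambda>x. exponential_density 1 x) \<in> borel_measurable borel"
    unfolding exponential_density_def[abs_def] by measurable
  have "(\<integral>\<^sup>+x. \<integral>\<^sup>+y. f (x - y) \<partial>std_exp \<partial>std_exp) = (\<integral>\<^sup>+x. ?e x * (\<integral>\<^sup>+y. ?e y * f (x - y) \<partial>lborel) \<partial>lborel)"
  proof -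
    have inner: "(\<integral>\<^sup>+y. f (x - y) \<partial>std_exp) = (\<integral>\<^sup>+y. ?e y * f (x - y) \<partial>lborel)" for x
      by (rule nn_E) measurable
    show ?thesis unfolding inner by (rule nn_E) measurable
  qed
  also have "\<dots> = (\<integral>\<^sup>+x. ?e x * (\<integral>\<^sup>+s. ?e (x - s) * f s \<partial>lborel) \<partial>lborel)"
  proof (intro nn_integral_cong)
    fix x :: real
    have "(\<integral>\<^sup>+y. ?e y * f (x - y) \<partial>lborel) = (\<integral>\<^sup>+s. ?e (x - s) * f s \<partial>lborel)"
      using nn_integral_real_affine[of "\<lambda>y. ?e y * f (x - y)" "-1" x] by simp
    then show "?e x * (\<integral>\<^sup>+y. ?e y * f (x - y) \<partial>lborel) = ?e x * (\<integral>\<^sup>+s. ?e (x - s) * f s \<partial>lborel)"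
      by simp
  qed
  also have "\<dots> = (\<integral>\<^sup>+x. \<integral>\<^sup>+s. ?e x * ?e (x - s) * f s \<partial>lborel \<partial>lborel)"
    by (intro nn_integral_cong) (simp add: nn_integral_cmult[symmetric] mult.assoc)
  also have "\<dots> = (\<integral>\<^sup>+s. \<integral>\<^sup>+x. ?e x * ?e (x - s) * f s \<partial>lborel \<partial>lborel)"
    by (rule lborel_pair.Fubini'[symmetric]) measurable
  also have "\<dots> = (\<integral>\<^sup>+s. f s * (\<integral>\<^sup>+x. ?e x * ?e (x - s) \<partial>lborel) \<partial>lborel)"
  proof (intro nn_integral_cong)
    fix s :: real
    have "(\<integral>\<^sup>+x. f s * (?e x * ?e (x - s)) \<partial>lborel) = f s * (\<integral>\<^sup>+x. ?e x * ?e (x - s) \<partial>lborel)"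
      by (rule nn_integral_cmult) measurable
    then show "(\<integral>\<^sup>+x. ?e x * ?e (x - s) * f s \<partial>lborel) = f s * (\<integral>\<^sup>+x. ?e x * ?e (x - s) \<partial>lborel)"
      by (simp add: ac_simps)
  qed
  also have "\<dots> = (\<integral>\<^sup>+s. f s * ennreal (exp (- \<bar>s\<bar>) / 2) \<partial>lborel)"
    by (simp add: inner_exp)
  finally show ?thesis .
qed


definition FF :: "real measure \<Rightarrow> real \<Rightarrow> real" where "FF \<mu> s = measure \<mu> {..s}"

definition KK :: "real measure \<Rightarrow> real \<Rightarrow> ennreal" where
  "KK \<mu> t = (\<integral>\<^sup>+x. \<integral>\<^sup>+y. ennreal (FF \<mu> (t + x - y)) \<partial>std_exp \<partial>std_exp)"

lemma FF_mono: "finite_measure \<mu> \<Longrightarrow> sets \<mu> = sets borel \<Longrightarrow> mono (FF \<mu>)"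
  unfolding FF_def mono_def
  by (intro allI impI finite_measure.finite_measure_mono) auto

lemma FF_borel[measurable]: "finite_measure \<mu> \<Longrightarrow> sets \<mu> = sets borel \<Longrightarrow> FF \<mu> \<in> borel_measurable borel"
  by (rule borel_measurable_mono) (rule FF_mono)

lemma ladder_clamp: "0 \<le> z \<Longrightarrow> ladder_step d x y z = max (- z) (min z (d + y - x))"
  unfolding ladder_step_def by (simp add: min_def max_def) 

lemma ladder_pre:
  assumes z: "0 \<le> z"
  shows "{d. ladder_step d x y z \<le> t} =
    (if 0 \<le> t then (if z \<le> t then UNIV else {..t + x - y}) else (if - t \<le> z then {..t + x - y} else {}))"
  using z unfolding ladder_clamp[OF z] by (auto simp: max_def min_def)

lemma ladder_borel[measurable]: "(\<lambda>(d, x, y, z). ladder_step d x y z) \<in> borel_measurable (borel \<Otimes>\<^sub>M (borel \<Otimes>\<^sub>M (borel \<Otimes>\<^sub>M borel)))"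
  unfolding ladder_step_def by measurable

lemma E_neg_null: "{..<0} \<in> null_sets std_exp"
proof -
  have "emeasure std_exp {..<0} = (\<integral>\<^sup>+x. ennreal (exponential_density 1 x) * indicator {..<0} x \<partial>lborel)"
    unfolding std_exp_def by (subst emeasure_density) auto
  also have "\<dots> = (\<integral>\<^sup>+x. (0::ennreal) \<partial>(lborel::real measure))"
    by (intro nn_integral_cong) (auto simp: exponential_density_def split: split_indicator)
  finally show ?thesis by (simp add: null_sets_def)
qed

lemma trans_le:
  assumes prob: "prob_space \<mu>" and sets: "sets \<mu> = sets borel"
  shows "emeasure (ladder_transition \<mu>) {..t} =
    (if 0 \<le> t then ennreal (1 - exp (-t)) + ennreal (exp (-t)) * KK \<mu> t else ennreal (exp t) * KK \<mu> t)"
proof -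
  interpret M: prob_space \<mu> by (rule prob)
  interpret E: prob_space std_exp by (rule prob_E)
  have E1[simp]: "emeasure std_exp UNIV = 1" using E.emeasure_space_1 by simp
  have [measurable_cong]: "sets \<mu> = sets borel" by (rule sets)
  have spM[simp]: "space \<mu> = UNIV" using sets_eq_imp_space_eq[OF sets] by simp
  let ?R = "std_exp \<Otimes>\<^sub>M (std_exp \<Otimes>\<^sub>M std_exp)"
  have pR: "prob_space ?R" by (intro prob_space_pair prob_E)
  interpret R: prob_space ?R by (rule pR)
  interpret EE: pair_sigma_finite std_exp std_exp
    by (simp add: pair_sigma_finite_def E.sigma_finite_measure_axioms)
  interpret ER: pair_sigma_finite std_exp "std_exp \<Otimes>\<^sub>M std_exp"
    using prob_space_pair[OF prob_E prob_E]
    by (simp add: pair_sigma_finite_def E.sigma_finite_measure_axioms prob_space_imp_sigma_finite)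
  interpret PS: pair_sigma_finite \<mu> ?R
    by (simp add: pair_sigma_finite_def M.sigma_finite_measure_axioms R.sigma_finite_measure_axioms)
  have FFb[measurable]: "FF \<mu> \<in> borel_measurable borel"
    by (rule FF_borel) (use M.finite_measure_axioms sets in auto)
  define h where "h r = (case r of (x, y, z) \<Rightarrow>
      (if 0 \<le> t then (if z \<le> t then 1 else ennreal (FF \<mu> (t + x - y)))
       else (if - t \<le> z then ennreal (FF \<mu> (t + x - y)) else 0)))" for r :: "real \<times> real \<times> real"
  have hb[measurable]: "h \<in> borel_measurable ?R"
    unfolding h_def by measurable
  let ?f = "\<lambda>(d, x, y, z). ladder_step d x y z"
  have fm: "?f \<in> measurable (\<mu> \<Otimes>\<^sub>M ?R) borel" by measurable
  have A: "?f -` {..t} \<inter> space (\<mu> \<Otimes>\<^sub>M ?R) \<in> sets (\<mu> \<Otimes>\<^sub>M ?R)"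
    using fm by measurable
  have "emeasure (ladder_transition \<mu>) {..t} = emeasure (\<mu> \<Otimes>\<^sub>M ?R) (?f -` {..t} \<inter> space (\<mu> \<Otimes>\<^sub>M ?R))"
    unfolding ladder_transition_def by (rule emeasure_distr[OF fm]) simp
  also have "\<dots> = (\<integral>\<^sup>+r. emeasure \<mu> ((\<lambda>d. (d, r)) -` (?f -` {..t} \<inter> space (\<mu> \<Otimes>\<^sub>M ?R))) \<partial>?R)"
    by (rule PS.emeasure_pair_measure_alt2[OF A])
  also have "\<dots> = (\<integral>\<^sup>+r. h r \<partial>?R)"
  proof (rule nn_integral_cong_AE)
    have s1: "UNIV \<times> {..<0} \<in> null_sets (std_exp \<Otimes>\<^sub>M std_exp)"
      by (rule sigma_finite_measure.times_in_null_sets2[OF E.sigma_finite_measure_axioms]) (use E_neg_null in auto)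
    have "UNIV \<times> (UNIV \<times> {..<0}) \<in> null_sets ?R"
      by (rule sigma_finite_measure.times_in_null_sets2[OF prob_space_imp_sigma_finite[OF prob_space_pair[OF prob_E prob_E]]])
         (use s1 in auto)
    then show "AE r in ?R. emeasure \<mu> ((\<lambda>d. (d, r)) -` (?f -` {..t} \<inter> space (\<mu> \<Otimes>\<^sub>M ?R))) = h r"
    proof (rule AE_I')
      show "{r \<in> space ?R. emeasure \<mu> ((\<lambda>d. (d, r)) -` (?f -` {..t} \<inter> space (\<mu> \<Otimes>\<^sub>M ?R))) \<noteq> h r}
          \<subseteq> UNIV \<times> (UNIV \<times> {..<0})"
      proof
        fix r assume r: "r \<in> {r \<in> space ?R. emeasure \<mu> ((\<lambda>d. (d, r)) -` (?f -` {..t} \<inter> space (\<mu> \<Otimes>\<^sub>M ?R))) \<noteq> h r}"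
        obtain x y z where rr: "r = (x, y, z)" by (cases r) auto
        have ne: "emeasure \<mu> ((\<lambda>d. (d, r)) -` (?f -` {..t} \<inter> space (\<mu> \<Otimes>\<^sub>M ?R))) \<noteq> h r" using r by simp
        have "\<not> 0 \<le> z"
        proof
          assume z: "0 \<le> z"
          have pre: "(\<lambda>d. (d, r)) -` (?f -` {..t} \<inter> space (\<mu> \<Otimes>\<^sub>M ?R)) = {d. ladder_step d x y z \<le> t}"
            by (auto simp: rr space_pair_measure)
          have "emeasure \<mu> {d. ladder_step d x y z \<le> t} = h r"
            unfolding ladder_pre[OF z] h_def rr using M.prob_space by (auto simp: M.emeasure_eq_measure FF_def)
          with ne pre show False by simp
        qed
        then show "r \<in> UNIV \<times> (UNIV \<times> {..<0})" by (simp add: rr)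
      qed
    qed
  qed
  also have "\<dots> = (\<integral>\<^sup>+x. \<integral>\<^sup>+y. \<integral>\<^sup>+z. h (x, y, z) \<partial>std_exp \<partial>std_exp \<partial>std_exp)"
  proof -
    have "(\<integral>\<^sup>+r. h r \<partial>?R) = (\<integral>\<^sup>+x. \<integral>\<^sup>+p. h (x, p) \<partial>(std_exp \<Otimes>\<^sub>M std_exp) \<partial>std_exp)"
      by (rule sigma_finite_measure.nn_integral_fst[OF prob_space_imp_sigma_finite[OF prob_space_pair[OF prob_E prob_E]], symmetric]) measurable
    also have "\<dots> = (\<integral>\<^sup>+x. \<integral>\<^sup>+y. \<integral>\<^sup>+z. h (x, y, z) \<partial>std_exp \<partial>std_exp \<partial>std_exp)"
      by (intro nn_integral_cong E.nn_integral_fst[symmetric]) measurable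
    finally show ?thesis .
  qed
  also have "\<dots> = (if 0 \<le> t then ennreal (1 - exp (-t)) + ennreal (exp (-t)) * KK \<mu> t else ennreal (exp t) * KK \<mu> t)"
  proof (cases "0 \<le> t")
    case True
    have inner: "(\<integral>\<^sup>+z. h (x, y, z) \<partial>std_exp) = ennreal (1 - exp (-t)) + ennreal (exp (-t)) * ennreal (FF \<mu> (t + x - y))" for x y
    proof -
      have "(\<integral>\<^sup>+z. h (x, y, z) \<partial>std_exp) = (\<integral>\<^sup>+z. indicator {..t} z + ennreal (FF \<mu> (t + x - y)) * indicator {t<..} z \<partial>std_exp)"
        using True by (intro nn_integral_cong) (auto simp: h_def split: split_indicator)
      also have "\<dots> = emeasure std_exp {..t} + ennreal (FF \<mu> (t + x - y)) * emeasure std_exp {t<..}"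
        by (subst nn_integral_add) (auto simp: nn_integral_cmult_indicator)
      finally show ?thesis using True by (simp add: E_le E_gt mult.commute)
    qed
    have "(\<integral>\<^sup>+x. \<integral>\<^sup>+y. \<integral>\<^sup>+z. h (x, y, z) \<partial>std_exp \<partial>std_exp \<partial>std_exp) =
        (\<integral>\<^sup>+x. \<integral>\<^sup>+y. ennreal (1 - exp (-t)) + ennreal (exp (-t)) * ennreal (FF \<mu> (t + x - y)) \<partial>std_exp \<partial>std_exp)"
      by (simp add: inner)
    also have "\<dots> = (\<integral>\<^sup>+x. ennreal (1 - exp (-t)) + ennreal (exp (-t)) * (\<integral>\<^sup>+y. ennreal (FF \<mu> (t + x - y)) \<partial>std_exp) \<partial>std_exp)"
      by (intro nn_integral_cong) (simp add: nn_integral_add nn_integral_cmult E.emeasure_space_1)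
    also have "\<dots> = ennreal (1 - exp (-t)) + ennreal (exp (-t)) * KK \<mu> t"
      unfolding KK_def by (simp add: nn_integral_add nn_integral_cmult E.emeasure_space_1)
    finally show ?thesis using True by simp
  next
    case False
    have inner: "(\<integral>\<^sup>+z. h (x, y, z) \<partial>std_exp) = ennreal (exp t) * ennreal (FF \<mu> (t + x - y))" for x y
    proof -
      have "(\<integral>\<^sup>+z. h (x, y, z) \<partial>std_exp) = (\<integral>\<^sup>+z. ennreal (FF \<mu> (t + x - y)) * indicator {-t..} z \<partial>std_exp)"
        using False by (intro nn_integral_cong) (auto simp: h_def split: split_indicator)
      also have "\<dots> = ennreal (FF \<mu> (t + x - y)) * emeasure std_exp {-t..}"
        by (simp add: nn_integral_cmult_indicator)
      finally show ?thesis using False by (simp add: E_ge mult.commute)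
    qed
    have "(\<integral>\<^sup>+x. \<integral>\<^sup>+y. \<integral>\<^sup>+z. h (x, y, z) \<partial>std_exp \<partial>std_exp \<partial>std_exp) =
        (\<integral>\<^sup>+x. \<integral>\<^sup>+y. ennreal (exp t) * ennreal (FF \<mu> (t + x - y)) \<partial>std_exp \<partial>std_exp)"
      by (simp add: inner)
    also have "\<dots> = ennreal (exp t) * KK \<mu> t"
      unfolding KK_def by (simp add: nn_integral_cmult)
    finally show ?thesis using False by simp
  qed
  finally show ?thesis .
qed


abbreviation "P2 \<equiv> std_exp \<Otimes>\<^sub>M std_exp"

lemma prob_P2: "prob_space P2" by (intro prob_space_pair prob_E)

lemma P2_integrable:
  fixes g :: "real \<times> real \<Rightarrow> real"
  assumes "g \<in> borel_measurable P2" "\<And>p. \<bar>g p\<bar> \<le> B"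
  shows "integrable P2 g"
proof -
  interpret P: prob_space P2 by (rule prob_P2)
  show ?thesis by (rule P.integrable_const_bound[where B=B]) (use assms in auto)
qed

definition cc :: real where "cc = 1 - (1 - exp (-1))^2 * exp (-3)"

lemma cc_bounds: "0 < cc" "cc < 1" "exp (-1) \<le> cc"
proof -
  have a0: "0 < exp (-1::real)" and a1: "exp (-1::real) < 1" by auto
  have b0: "0 < exp (-3::real)" and b1: "exp (-3::real) < 1" by auto
  have p: "0 < (1 - exp (-1::real))^2 * exp (-3)" using a1 b0 by simp
  have q: "(1 - exp (-1::real)) * exp (-3) \<le> 1" using a0 a1 b0 b1
    by (intro mult_le_one) auto
  have r: "(1 - exp (-1::real))^2 * exp (-3) = (1 - exp (-1)) * ((1 - exp (-1)) * exp (-3))"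
    by (simp add: power2_eq_square)
  have s: "(1 - exp (-1::real)) * ((1 - exp (-1)) * exp (-3)) \<le> (1 - exp (-1)) * 1"
    using q a1 by (intro mult_left_mono) auto
  have s': "(1 - exp (-1::real)) * ((1 - exp (-1)) * exp (-3)) \<le> 1 - exp (-1)" using s by simp
  have t: "(1 - exp (-1::real))^2 * exp (-3) \<le> 1 - exp (-1)" using r s' by linarith
  show "0 < cc" unfolding cc_def using t a0 by linarith
  show "cc < 1" unfolding cc_def using p by simp
  show "exp (-1) \<le> cc" unfolding cc_def using t by linarith
qed

lemma Q_bound: "exp (- \<bar>t\<bar>) * (\<integral>p. exp (- \<bar>t + fst p - snd p\<bar>) \<partial>P2) \<le> cc"
proof -
  interpret P: prob_space P2 by (rule prob_P2)
  interpret E: prob_space std_exp by (rule prob_E)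
  let ?g = "\<lambda>p. exp (- \<bar>t + fst p - snd p\<bar>)"
  have gb: "?g \<in> borel_measurable P2" by measurable
  have gi: "integrable P2 ?g" by (rule P2_integrable[OF gb, of 1]) simp
  have g1: "(\<integral>p. ?g p \<partial>P2) \<le> 1"
    using P.integral_le_const[of ?g 1] gi by auto
  have g0: "0 \<le> (\<integral>p. ?g p \<partial>P2)" by (rule integral_nonneg_AE) auto
  show ?thesis
  proof (cases "1 \<le> \<bar>t\<bar>")
    case True
    have "exp (- \<bar>t\<bar>) \<le> exp (-1)" using True by simp
    then have "exp (- \<bar>t\<bar>) * (\<integral>p. ?g p \<partial>P2) \<le> exp (-1) * 1"
      using g0 g1 by (intro mult_mono) auto
    then show ?thesis using cc_bounds(3) by simp
  next
    case False
    let ?A = "{3<..} \<times> {..1::real}"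
    let ?k = "1 - exp (-1::real)"
    have A: "?A \<in> sets P2" by measurable
    have PA: "measure P2 ?A = exp (-3) * (1 - exp (-1))"
    proof -
      have "emeasure P2 ?A = emeasure std_exp {3<..} * emeasure std_exp {..1}"
        by (rule E.emeasure_pair_measure_Times) auto
      also have "\<dots> = ennreal (exp (-3) * (1 - exp (-1)))"
        by (simp add: E_gt E_le ennreal_mult[symmetric])
      finally show ?thesis by (simp add: P.emeasure_eq_measure)
    qed
    have le: "?g p \<le> 1 - ?k * indicator ?A p" for p
    proof (cases "p \<in> ?A")
      case True
      then have "1 \<le> \<bar>t + fst p - snd p\<bar>" using False by (auto simp: mem_Times_iff)
      then show ?thesis using True by simp
    qed simp
    have iA: "integrable P2 (indicator ?A :: _ \<Rightarrow> real)"
      by (rule P2_integrable[where B=1]) (rule borel_measurable_indicator[OF A], simp split: split_indicator)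
    have "(\<integral>p. ?g p \<partial>P2) \<le> (\<integral>p. 1 - ?k * indicator ?A p \<partial>P2)"
      by (rule integral_mono[OF gi]) (use le in \<open>auto intro!: P2_integrable[where B="1"] simp: indicator_def\<close>)
    also have "\<dots> = 1 - ?k * measure P2 ?A"
      using A iA by (subst Bochner_Integration.integral_diff) (auto simp: P.prob_space)
    also have "\<dots> = cc" unfolding PA cc_def by (simp add: power2_eq_square)
    finally have "(\<integral>p. ?g p \<partial>P2) \<le> cc" .
    moreover have "exp (- \<bar>t\<bar>) * (\<integral>p. ?g p \<partial>P2) \<le> (\<integral>p. ?g p \<partial>P2)"
      using mult_right_mono[OF _ g0, of "exp (- \<bar>t\<bar>)" 1] by simp
    ultimately show ?thesis by linarith
  qed
qed

lemma contraction_zero: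
  fixes h :: "real \<Rightarrow> real"
  assumes hb[measurable]: "h \<in> borel_measurable borel"
    and bnd: "\<And>t. \<bar>h t\<bar> \<le> 1"
    and rec: "\<And>t. \<bar>h t\<bar> \<le> exp (- \<bar>t\<bar>) * (\<integral>p. \<bar>h (t + fst p - snd p)\<bar> \<partial>P2)"
  shows "h t = 0"
proof -
  interpret P: prob_space P2 by (rule prob_P2)
  have int: "integrable P2 (\<lambda>p. \<bar>h (t + fst p - snd p)\<bar>)" for t
    by (rule P2_integrable[where B=1]) (use bnd in auto)
  have ind: "\<forall>t. \<bar>h t\<bar> \<le> cc ^ n" for n
  proof (induction n)
    case 0 then show ?case using bnd by simp
  next
    case (Suc n)
    have h1: "\<bar>h u\<bar> \<le> exp (- \<bar>u\<bar>) * cc ^ n" for u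
    proof -
      have "(\<integral>p. \<bar>h (u + fst p - snd p)\<bar> \<partial>P2) \<le> cc ^ n"
        using P.integral_le_const[OF int[of u], of "cc ^ n"] Suc.IH by auto
      then show ?thesis using rec[of u] by (meson exp_ge_zero mult_left_mono order_trans)
    qed
    show ?case
    proof
      fix t
      have "(\<integral>p. \<bar>h (t + fst p - snd p)\<bar> \<partial>P2) \<le> (\<integral>p. cc ^ n * exp (- \<bar>t + fst p - snd p\<bar>) \<partial>P2)"
      proof (rule integral_mono[OF int])
        show "integrable P2 (\<lambda>p. cc ^ n * exp (- \<bar>t + fst p - snd p\<bar>))"
          by (intro integrable_mult_right P2_integrable[where B=1]) auto
        show "\<bar>h (t + fst p - snd p)\<bar> \<le> cc ^ n * exp (- \<bar>t + fst p - snd p\<bar>)" for p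
          using h1[of "t + fst p - snd p"] by (simp add: mult.commute)
      qed
      also have "\<dots> = cc ^ n * (\<integral>p. exp (- \<bar>t + fst p - snd p\<bar>) \<partial>P2)" by simp
      finally have "exp (- \<bar>t\<bar>) * (\<integral>p. \<bar>h (t + fst p - snd p)\<bar> \<partial>P2) \<le>
          cc ^ n * (exp (- \<bar>t\<bar>) * (\<integral>p. exp (- \<bar>t + fst p - snd p\<bar>) \<partial>P2))"
        by (simp add: mult_left_mono mult.left_commute)
      also have "\<dots> \<le> cc ^ n * cc"
        using Q_bound[of t] cc_bounds by (intro mult_left_mono) auto
      finally show "\<bar>h t\<bar> \<le> cc ^ Suc n" using rec[of t] by (simp add: mult.commute)
    qed
  qed
  have "(\<lambda>n. cc ^ n) \<longlonglongrightarrow> 0" using cc_bounds by (intro LIMSEQ_realpow_zero) auto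
  then have "\<bar>h t\<bar> \<le> 0"
    using ind by (intro tendsto_lowerbound[where F=sequentially]) (auto simp: eventually_sequentially)
  then show ?thesis by simp
qed


lemma FF_range:
  assumes "prob_space \<mu>" "sets \<mu> = sets borel"
  shows "0 \<le> FF \<mu> s" "FF \<mu> s \<le> 1"
proof -
  interpret M: prob_space \<mu> by fact
  show "0 \<le> FF \<mu> s" unfolding FF_def by simp
  show "FF \<mu> s \<le> 1" unfolding FF_def by (rule M.prob_le_1)
qed

definition Kr :: "real measure \<Rightarrow> real \<Rightarrow> real" where
  "Kr \<mu> t = (\<integral>p. FF \<mu> (t + fst p - snd p) \<partial>P2)"

lemma KK_real:
  assumes prob: "prob_space \<mu>" and sets: "sets \<mu> = sets borel"
  shows "KK \<mu> t = ennreal (Kr \<mu> t)" and "0 \<le> Kr \<mu> t" and "Kr \<mu> t \<le> 1"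
    and "integrable P2 (\<lambda>p. FF \<mu> (t + fst p - snd p))"
proof -
  interpret E: prob_space std_exp by (rule prob_E)
  interpret P: prob_space P2 by (rule prob_P2)
  interpret M: prob_space \<mu> by (rule prob)
  have FFb[measurable]: "FF \<mu> \<in> borel_measurable borel"
    by (rule FF_borel) (use M.finite_measure_axioms sets in auto)
  show int: "integrable P2 (\<lambda>p. FF \<mu> (t + fst p - snd p))"
    by (rule P2_integrable[where B=1]) (use FF_range[OF prob sets] in auto)
  have "KK \<mu> t = (\<integral>\<^sup>+p. ennreal (FF \<mu> (t + fst p - snd p)) \<partial>P2)"
  proof -
    have m: "(\<lambda>p. ennreal (FF \<mu> (t + fst p - snd p))) \<in> borel_measurable P2" by measurable
    show ?thesis unfolding KK_def using E.nn_integral_fst[OF m] by simp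
  qed
  also have "\<dots> = ennreal (Kr \<mu> t)"
    unfolding Kr_def by (rule nn_integral_eq_integral[OF int]) (use FF_range[OF prob sets] in auto)
  finally show "KK \<mu> t = ennreal (Kr \<mu> t)" .
  show "0 \<le> Kr \<mu> t" unfolding Kr_def by (rule integral_nonneg_AE) (use FF_range[OF prob sets] in auto)
  show "Kr \<mu> t \<le> 1" unfolding Kr_def
    using P.integral_le_const[OF int, of 1] FF_range[OF prob sets] by auto
qed

lemma stat_eq:
  assumes st: "ladder_stationary \<mu>"
  shows "FF \<mu> t = (if 0 \<le> t then 1 - exp (-t) + exp (-t) * Kr \<mu> t else exp t * Kr \<mu> t)"
proof -
  have prob: "prob_space \<mu>" and sets: "sets \<mu> = sets borel" and fx: "ladder_transition \<mu> = \<mu>"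
    using st unfolding ladder_stationary_def by auto
  interpret M: prob_space \<mu> by (rule prob)
  have K: "KK \<mu> t = ennreal (Kr \<mu> t)" "0 \<le> Kr \<mu> t" using KK_real[OF prob sets] by auto
  have "ennreal (FF \<mu> t) = emeasure \<mu> {..t}"
    unfolding FF_def by (simp add: M.emeasure_eq_measure)
  also have "\<dots> = (if 0 \<le> t then ennreal (1 - exp (-t)) + ennreal (exp (-t)) * KK \<mu> t else ennreal (exp t) * KK \<mu> t)"
    using trans_le[OF prob sets, of t] fx by simp
  also have "\<dots> = ennreal (if 0 \<le> t then 1 - exp (-t) + exp (-t) * Kr \<mu> t else exp t * Kr \<mu> t)"
    using K by (auto simp: ennreal_mult[symmetric] ennreal_plus[symmetric] simp del: ennreal_plus)
  finally show ?thesis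
    using K FF_range[OF prob sets] by (subst (asm) ennreal_inj) auto
qed

lemma stat_unique:
  assumes s1: "ladder_stationary \<mu>1" and s2: "ladder_stationary \<mu>2"
  shows "\<mu>1 = \<mu>2"
proof -
  have p1: "prob_space \<mu>1" and e1: "sets \<mu>1 = sets borel" and p2: "prob_space \<mu>2" and e2: "sets \<mu>2 = sets borel"
    using s1 s2 unfolding ladder_stationary_def by auto
  interpret P: prob_space P2 by (rule prob_P2)
  interpret M1: prob_space \<mu>1 by (rule p1)
  interpret M2: prob_space \<mu>2 by (rule p2)
  have [measurable]: "FF \<mu>1 \<in> borel_measurable borel" "FF \<mu>2 \<in> borel_measurable borel"
    by (rule FF_borel; use M1.finite_measure_axioms M2.finite_measure_axioms e1 e2 in auto)+
  define h where "h t = FF \<mu>1 t - FF \<mu>2 t" for t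
  have hb[measurable]: "h \<in> borel_measurable borel" unfolding h_def[abs_def] by measurable
  have int1: "integrable P2 (\<lambda>p. FF \<mu>1 (t + fst p - snd p))" for t using KK_real(4)[OF p1 e1] .
  have int2: "integrable P2 (\<lambda>p. FF \<mu>2 (t + fst p - snd p))" for t using KK_real(4)[OF p2 e2] .
  have hz: "h t = 0" for t
  proof (rule contraction_zero[OF hb])
    show "\<bar>h t\<bar> \<le> 1" for t unfolding h_def using FF_range[OF p1 e1, of t] FF_range[OF p2 e2, of t] by auto
    fix t
    have D: "Kr \<mu>1 t - Kr \<mu>2 t = (\<integral>p. h (t + fst p - snd p) \<partial>P2)"
      unfolding Kr_def h_def using int1 int2 by simp
    have "\<bar>Kr \<mu>1 t - Kr \<mu>2 t\<bar> \<le> (\<integral>p. \<bar>h (t + fst p - snd p)\<bar> \<partial>P2)"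
      unfolding D by (rule integral_abs_bound)
    moreover have "\<bar>h t\<bar> = exp (- \<bar>t\<bar>) * \<bar>Kr \<mu>1 t - Kr \<mu>2 t\<bar>"
      unfolding h_def stat_eq[OF s1, of t] stat_eq[OF s2, of t]
      by (auto simp: abs_mult right_diff_distrib[symmetric])
    ultimately show "\<bar>h t\<bar> \<le> exp (- \<bar>t\<bar>) * (\<integral>p. \<bar>h (t + fst p - snd p)\<bar> \<partial>P2)"
      by (simp add: mult_left_mono)
  qed
  have rd1: "real_distribution \<mu>1" by (simp add: real_distribution_def real_distribution_axioms_def p1 e1)
  have rd2: "real_distribution \<mu>2" by (simp add: real_distribution_def real_distribution_axioms_def p2 e2)
  show ?thesis
  proof (rule cdf_unique[OF rd1 rd2])
    show "cdf \<mu>1 = cdf \<mu>2"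
      using hz unfolding cdf_def[abs_def] h_def FF_def by (auto intro!: ext)
  qed
qed


definition LL :: "real \<Rightarrow> ennreal" where
  "LL t = (\<integral>\<^sup>+s. ennreal (Fx (t + s)) * ennreal (exp (- \<bar>s\<bar>) / 2) \<partial>lborel)"

definition Jr :: "real \<Rightarrow> real" where
  "Jr t = 1/2 * (exp (-t) * (CC * (\<Sum>k. b3 k)) + (H2 t t - H2 t 0) + (1 - CC * exp t * ser b3 3 t))"

lemma FF_mur: "FF mur t = Fx t"
proof -
  interpret M: prob_space mur by (rule prob_mur)
  show ?thesis unfolding FF_def using mur_le[of t] Fx_range[of t]
    by (simp add: M.emeasure_eq_measure)
qed

lemma KK_mur: "KK mur t = LL t"
proof -
  have "KK mur t = (\<integral>\<^sup>+x. \<integral>\<^sup>+y. ennreal (Fx (t + (x - y))) \<partial>std_exp \<partial>std_exp)"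
    unfolding KK_def FF_mur by (simp add: add_diff_eq)
  also have "\<dots> = LL t"
    unfolding LL_def by (rule laplace[where f = "\<lambda>s. ennreal (Fx (t + s))"]) measurable
  finally show ?thesis .
qed

lemma LL_sum: "LL t + LL (- t) = 1"
proof -
  interpret E: prob_space std_exp by (rule prob_E)
  let ?w = "\<lambda>s. ennreal (exp (- \<bar>s\<bar>) / 2)"
  have "LL (- t) = (\<integral>\<^sup>+s. ennreal (Fx (- t + - s)) * ?w (- s) \<partial>lborel)"
    unfolding LL_def by (rule reflect_nn) measurable
  also have "\<dots> = (\<integral>\<^sup>+s. ennreal (1 - Fx (t + s)) * ?w s \<partial>lborel)"
  proof (intro nn_integral_cong)
    fix s :: real
    have "Fx (- t + - s) = 1 - Fx (t + s)" using Fx_sym[of "t + s"] by simp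
    then show "ennreal (Fx (- t + - s)) * ?w (- s) = ennreal (1 - Fx (t + s)) * ?w s" by simp
  qed
  finally have m: "LL (- t) = (\<integral>\<^sup>+s. ennreal (1 - Fx (t + s)) * ?w s \<partial>lborel)" .
  have "LL t + LL (- t) = LL t + (\<integral>\<^sup>+s. ennreal (1 - Fx (t + s)) * ?w s \<partial>lborel)"
    using m by simp
  also have "\<dots> = (\<integral>\<^sup>+s. ennreal (Fx (t + s)) * ?w s + ennreal (1 - Fx (t + s)) * ?w s \<partial>lborel)"
    unfolding LL_def by (rule nn_integral_add[symmetric]) measurable
  also have "\<dots> = (\<integral>\<^sup>+s. (\<lambda>_. 1::ennreal) s * ?w s \<partial>lborel)"
  proof (intro nn_integral_cong)
    fix s :: real
    have "ennreal (Fx (t + s)) + ennreal (1 - Fx (t + s)) = ennreal (Fx (t + s) + (1 - Fx (t + s)))"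
      using Fx_range[of "t + s"] by (intro ennreal_plus[symmetric]) auto
    then show "ennreal (Fx (t + s)) * ?w s + ennreal (1 - Fx (t + s)) * ?w s = (\<lambda>_. 1::ennreal) s * ?w s"
      by (simp add: distrib_right[symmetric])
  qed
  also have "\<dots> = (\<integral>\<^sup>+x. \<integral>\<^sup>+y. (\<lambda>_. 1::ennreal) (x - y) \<partial>std_exp \<partial>std_exp)"
    by (rule laplace[symmetric]) measurable
  also have "\<dots> = 1" using E.emeasure_space_1 by simp
  finally show ?thesis .
qed

lemma ennr_eq: "0 \<le> a \<Longrightarrow> 0 \<le> b \<Longrightarrow> 0 \<le> c \<Longrightarrow> 0 \<le> d \<Longrightarrow> a * b = c * d \<Longrightarrow>
   ennreal a * ennreal b = ennreal c * ennreal d"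
  by (simp add: ennreal_mult[symmetric])

lemma LL_pos:
  assumes t: "0 \<le> t"
  shows "LL t = ennreal (Jr t)" and "0 \<le> Jr t"
proof -
  let ?F = "\<lambda>u. ennreal (Fx u) * ennreal (exp (- \<bar>u - t\<bar>) / 2)"
  have Fb[measurable]: "?F \<in> borel_measurable borel" by measurable
  have tr: "LL t = (\<integral>\<^sup>+u. ?F u \<partial>lborel)"
    unfolding LL_def by (subst translate_nn[OF Fb, of t]) simp
  have split: "(\<integral>\<^sup>+u. ?F u \<partial>lborel) = (\<integral>\<^sup>+u. ?F u * indicator {..<0} u \<partial>lborel) +
     (\<integral>\<^sup>+u. ?F u * indicator {0..t} u \<partial>lborel) + (\<integral>\<^sup>+u. ?F u * indicator {t<..} u \<partial>lborel)"
  proof -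
    have "(\<integral>\<^sup>+u. ?F u \<partial>lborel) = (\<integral>\<^sup>+u. (?F u * indicator {..<0} u + ?F u * indicator {0..t} u) + ?F u * indicator {t<..} u \<partial>lborel)"
      using t by (intro nn_integral_cong) (auto split: split_indicator)
    also have "\<dots> = (\<integral>\<^sup>+u. ?F u * indicator {..<0} u + ?F u * indicator {0..t} u \<partial>lborel) + (\<integral>\<^sup>+u. ?F u * indicator {t<..} u \<partial>lborel)"
      by (rule nn_integral_add) measurable
    also have "(\<integral>\<^sup>+u. ?F u * indicator {..<0} u + ?F u * indicator {0..t} u \<partial>lborel) =
        (\<integral>\<^sup>+u. ?F u * indicator {..<0} u \<partial>lborel) + (\<integral>\<^sup>+u. ?F u * indicator {0..t} u \<partial>lborel)"
      by (rule nn_integral_add) measurable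
    finally show ?thesis .
  qed
  have S3: "0 \<le> CC * (\<Sum>k. b3 k)" by (rule int_G_exp_nonneg)
  have pA: "(\<integral>\<^sup>+u. ?F u * indicator {..<0} u \<partial>lborel) = ennreal (exp (-t) / 2) * ennreal (CC * (\<Sum>k. b3 k))"
  proof -
    have "(\<integral>\<^sup>+u. ?F u * indicator {..<0} u \<partial>lborel) =
        (\<integral>\<^sup>+u. ennreal (exp (-t) / 2) * (ennreal (Gf (- u) * exp (- (- u))) * indicator {..<0} u) \<partial>lborel)"
    proof (intro nn_integral_cong)
      fix u :: real
      show "?F u * indicator {..<0} u = ennreal (exp (-t) / 2) * (ennreal (Gf (- u) * exp (- (- u))) * indicator {..<0} u)"
      proof (cases "u < 0")
        case True
        have eq: "Fx u * (exp (- \<bar>u - t\<bar>) / 2) = exp (-t) / 2 * (Gf (- u) * exp (- (- u)))"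
          using True t by (simp add: Fx_def exp_diff exp_minus field_simps)
        have "?F u = ennreal (exp (-t) / 2) * ennreal (Gf (- u) * exp (- (- u)))"
          by (rule ennr_eq[OF _ _ _ _ eq]) (use True Fx_range[of u] Gf_nonneg[of "-u"] in auto)
        then show ?thesis using True by simp
      qed simp
    qed
    also have "\<dots> = ennreal (exp (-t) / 2) * (\<integral>\<^sup>+u. ennreal (Gf (- u) * exp (- (- u))) * indicator {..<0} u \<partial>lborel)"
      by (rule nn_integral_cmult) (use Gf_borel in measurable)
    also have "(\<integral>\<^sup>+u. ennreal (Gf (- u) * exp (- (- u))) * indicator {..<0} u \<partial>lborel) =
        (\<integral>\<^sup>+v. ennreal (Gf v * exp (- v)) * indicator {..<0} (- v) \<partial>lborel)"
    proof -
      have mb: "(\<lambda>u. ennreal (Gf (- u) * exp (- (- u))) * indicator {..<0} u) \<in> borel_measurable borel"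
        using Gf_borel by measurable
      show ?thesis using reflect_nn[OF mb] by simp
    qed
    also have "\<dots> = (\<integral>\<^sup>+v. ennreal (Gf v * exp (- v)) * indicator {0..} v \<partial>lborel)"
      by (intro nn_integral_cong_AE) (use AE_lborel_singleton[of 0] in \<open>auto elim!: eventually_mono split: split_indicator\<close>)
    also have "\<dots> = ennreal (CC * (\<Sum>k. b3 k))" by (rule int_G_exp)
    finally show ?thesis .
  qed
  have pB: "(\<integral>\<^sup>+u. ?F u * indicator {0..t} u \<partial>lborel) = ennreal (1/2) * ennreal (H2 t t - H2 t 0)"
  proof -
    have "(\<integral>\<^sup>+u. ?F u * indicator {0..t} u \<partial>lborel) =
        (\<integral>\<^sup>+u. ennreal (1/2) * (ennreal ((1 - Gf u) * exp (u - t)) * indicator {0..t} u) \<partial>lborel)"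
    proof (intro nn_integral_cong)
      fix u :: real
      show "?F u * indicator {0..t} u = ennreal (1/2) * (ennreal ((1 - Gf u) * exp (u - t)) * indicator {0..t} u)"
      proof (cases "u \<in> {0..t}")
        case True
        have eq: "Fx u * (exp (- \<bar>u - t\<bar>) / 2) = 1/2 * ((1 - Gf u) * exp (u - t))"
          using True by (simp add: Fx_def field_simps)
        have "?F u = ennreal (1/2) * ennreal ((1 - Gf u) * exp (u - t))"
          by (rule ennr_eq[OF _ _ _ _ eq]) (use True Fx_range[of u] Gf_le[of u] in auto)
        then show ?thesis using True by simp
      qed simp
    qed
    also have "\<dots> = ennreal (1/2) * (\<integral>\<^sup>+u. ennreal ((1 - Gf u) * exp (u - t)) * indicator {0..t} u \<partial>lborel)"
      by (rule nn_integral_cmult) (use Gf_borel in measurable)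
    also have "\<dots> = ennreal (1/2) * ennreal (H2 t t - H2 t 0)" by (simp add: int_mid(1)[OF t])
    finally show ?thesis .
  qed
  have pC: "(\<integral>\<^sup>+u. ?F u * indicator {t<..} u \<partial>lborel) = ennreal (1/2) * ennreal (1 - CC * exp t * ser b3 3 t)"
  proof -
    have "(\<integral>\<^sup>+u. ?F u * indicator {t<..} u \<partial>lborel) =
        (\<integral>\<^sup>+u. ennreal (1/2) * (ennreal ((1 - Gf u) * exp (t - u)) * indicator {t<..} u) \<partial>lborel)"
    proof (intro nn_integral_cong)
      fix u :: real
      show "?F u * indicator {t<..} u = ennreal (1/2) * (ennreal ((1 - Gf u) * exp (t - u)) * indicator {t<..} u)"
      proof (cases "t < u")
        case True
        have eq: "Fx u * (exp (- \<bar>u - t\<bar>) / 2) = 1/2 * ((1 - Gf u) * exp (t - u))"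
          using True t by (simp add: Fx_def field_simps)
        have "?F u = ennreal (1/2) * ennreal ((1 - Gf u) * exp (t - u))"
          by (rule ennr_eq[OF _ _ _ _ eq]) (use True t Fx_range[of u] Gf_le[of u] in auto)
        then show ?thesis using True by simp
      qed simp
    qed
    also have "\<dots> = ennreal (1/2) * (\<integral>\<^sup>+u. ennreal ((1 - Gf u) * exp (t - u)) * indicator {t<..} u \<partial>lborel)"
      by (rule nn_integral_cmult) (use Gf_borel in measurable)
    also have "(\<integral>\<^sup>+u. ennreal ((1 - Gf u) * exp (t - u)) * indicator {t<..} u \<partial>lborel) =
        (\<integral>\<^sup>+u. ennreal ((1 - Gf u) * exp (t - u)) * indicator {t..} u \<partial>lborel)"
      by (intro nn_integral_cong_AE) (use AE_lborel_singleton[of t] in \<open>auto elim!: eventually_mono split: split_indicator\<close>)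
    also have "\<dots> = ennreal (1 - CC * exp t * ser b3 3 t)" by (rule int_right(1)[OF t])
    finally show ?thesis .
  qed
  have X: "0 \<le> H2 t t - H2 t 0" using int_mid(2)[OF t] by simp
  have Y: "0 \<le> 1 - CC * exp t * ser b3 3 t" using int_right(2)[OF t] by simp
  show "0 \<le> Jr t" unfolding Jr_def using S3 X Y by simp
  have h1: "ennreal (exp (-t) / 2) * ennreal (CC * (\<Sum>k. b3 k)) = ennreal (exp (-t) / 2 * (CC * (\<Sum>k. b3 k)))"
    by (rule ennreal_mult[symmetric]) (use S3 in auto)
  have h2: "ennreal (1/2) * ennreal (H2 t t - H2 t 0) = ennreal (1/2 * (H2 t t - H2 t 0))"
    by (rule ennreal_mult[symmetric]) (use X in auto)
  have h3: "ennreal (1/2) * ennreal (1 - CC * exp t * ser b3 3 t) = ennreal (1/2 * (1 - CC * exp t * ser b3 3 t))"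
    by (rule ennreal_mult[symmetric]) (use Y in auto)
  have "LL t = ennreal (exp (-t) / 2 * (CC * (\<Sum>k. b3 k))) + ennreal (1/2 * (H2 t t - H2 t 0)) +
      ennreal (1/2 * (1 - CC * exp t * ser b3 3 t))"
    unfolding tr split pA pB pC h1 h2 h3 ..
  also have "\<dots> = ennreal (exp (-t) / 2 * (CC * (\<Sum>k. b3 k)) + 1/2 * (H2 t t - H2 t 0))
      + ennreal (1/2 * (1 - CC * exp t * ser b3 3 t))"
    by (subst ennreal_plus[symmetric]) (use S3 X in auto)
  also have "\<dots> = ennreal (exp (-t) / 2 * (CC * (\<Sum>k. b3 k)) + 1/2 * (H2 t t - H2 t 0)
      + 1/2 * (1 - CC * exp t * ser b3 3 t))"
    by (rule ennreal_plus[symmetric]) (use S3 X Y in auto)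
  also have "exp (-t) / 2 * (CC * (\<Sum>k. b3 k)) + 1/2 * (H2 t t - H2 t 0)
      + 1/2 * (1 - CC * exp t * ser b3 3 t) = Jr t"
    unfolding Jr_def by (simp add: algebra_simps)
  finally show "LL t = ennreal (Jr t)" .
qed

definition bbS :: "nat \<Rightarrow> real" where "bbS k = bb (Suc k)"

lemma ser_b13: "ser b1 2 t - ser b3 2 t = -2 * ser bbS 2 t"
proof -
  have c: "(\<lambda>k. b1 k + -1 * b3 k) = (\<lambda>k. -2 * bbS k)"
  proof (rule ext)
    fix k show "b1 k + -1 * b3 k = -2 * bbS k"
      using bb_diff[of k] by (simp add: b1_def b3_def bbS_def)
  qed
  have "ser (\<lambda>k. b1 k + -1 * b3 k) 2 t = ser b1 2 t + -1 * ser b3 2 t"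
    using ser_add[OF entire_b1 entire_cmult[OF entire_b3, where c="-1"], where m=2 and u=t]
      ser_cmult[OF entire_b3, where c="-1" and m=2 and u=t] by simp
  then show ?thesis unfolding c ser_cmult[OF entire_bb_Suc[folded bbS_def]] by simp
qed

lemma ser_bbS: "exp (-t) * ser bbS 2 t = ser bb 2 t - exp (- (2 * t)) / 2"
proof -
  have "ser bbS 3 t = (\<Sum>k. (\<lambda>k. bb k * exp (- (real (k + 2) * t))) (Suc k))"
    unfolding ser_def bbS_def by (simp add: add.commute)
  also have "\<dots> = ser bb 2 t - bb 0 * exp (- (real 2 * t))"
    unfolding ser_def using suminf_split_head[OF ser_summable[OF entire_bb, where m=2 and u=t]] by simp
  finally have "ser bbS 3 t = ser bb 2 t - exp (- (2 * t)) / 2" by (simp add: bb0)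
  then show ?thesis using ser3[OF entire_bb_Suc[folded bbS_def], of t] by simp
qed

lemma CC_sum: "CC * (\<Sum>k. bb k) = 1/2"
  unfolding CC_def using sum_bb_pos by simp

lemma key_identity:
  assumes t: "0 \<le> t"
  shows "1 - Gf t = 1 - exp (-t) + exp (-t) * Jr t"
proof -
  define q where "q = exp (-t)"
  define p where "p = exp t"
  have pq: "p * q = 1" unfolding p_def q_def by (simp add: exp_minus)
  have q2: "exp (- (2 * t)) = q * q" unfolding q_def by (simp add: exp_add[symmetric])
  define A where "A = ser b1 2 t"
  define B where "B = ser b3 2 t"
  define G where "G = ser bb 2 t"
  define Sb where "Sb = ser bbS 2 t"
  define S1 where "S1 = (\<Sum>k. b1 k)"
  define S3 where "S3 = (\<Sum>k. b3 k)"
  define Sbb where "Sbb = (\<Sum>k. bb k)"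
  define Sb0 where "Sb0 = (\<Sum>k. bbS k)"
  have f1: "A = q * ser b1 1 t" unfolding A_def q_def by (rule ser2[OF entire_b1])
  have f2: "ser b3 3 t = q * B" unfolding B_def q_def by (rule ser3[OF entire_b3])
  have f3: "A - B = -2 * Sb" unfolding A_def B_def Sb_def by (rule ser_b13)
  have f4: "q * Sb = G - q * q / 2" unfolding q_def Sb_def G_def using ser_bbS[of t] q2[unfolded q_def] by simp
  have f5: "S1 - S3 = -2 * Sb0" unfolding S1_def S3_def Sb0_def using ser_b13[of 0] by (simp add: ser_zero)
  have f6: "Sb0 = Sbb - 1/2" unfolding Sb0_def Sbb_def using ser_bbS[of 0] by (simp add: ser_zero)
  have f7: "CC * Sbb = 1/2" unfolding Sbb_def by (rule CC_sum)
  have h2t: "H2 t t = 1 + CC * q * ser b1 1 t" unfolding H2_def q_def by simp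
  have h20: "H2 t 0 = q + CC * q * S1" unfolding H2_def q_def S1_def ser_zero by simp
  have J: "Jr t = 1/2 * (q * (CC * S3) + (H2 t t - H2 t 0) + (1 - CC * p * (q * B)))"
    unfolding Jr_def q_def[symmetric] p_def[symmetric] S3_def[symmetric] f2 ..
  have Gt: "Gf t = CC * G" unfolding Gf_def G_def ..
  have e1: "q * ser b1 1 t = A" using f1 by simp
  show ?thesis
    unfolding q_def[symmetric] Gt J h2t h20
    using pq f3 f4 f5 f6 f7 e1 by algebra
qed

lemma mur_stationary: "ladder_stationary mur"
proof -
  interpret M: prob_space mur by (rule prob_mur)
  let ?T = "ladder_transition mur"
  let ?R = "std_exp \<Otimes>\<^sub>M (std_exp \<Otimes>\<^sub>M std_exp)"
  have pT: "prob_space ?T"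
    unfolding ladder_transition_def
    by (rule prob_space.prob_space_distr[OF prob_space_pair[OF prob_mur prob_space_pair[OF prob_E prob_space_pair[OF prob_E prob_E]]]])
       measurable
  have sT: "sets ?T = sets borel" unfolding ladder_transition_def by simp
  have eq: "emeasure ?T {..t} = emeasure mur {..t}" for t
  proof (cases "0 \<le> t")
    case True
    have "emeasure ?T {..t} = ennreal (1 - exp (-t)) + ennreal (exp (-t)) * ennreal (Jr t)"
      using trans_le[OF prob_mur sets_mur, of t] True by (simp add: KK_mur LL_pos(1)[OF True])
    also have "\<dots> = ennreal (1 - exp (-t) + exp (-t) * Jr t)"
      using LL_pos(2)[OF True] True by (simp add: ennreal_mult[symmetric] ennreal_plus[symmetric] del: ennreal_plus)
    also have "\<dots> = ennreal (Fx t)"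
    proof -
      have Fxt: "Fx t = 1 - Gf t" using True by (simp add: Fx_def)
      show ?thesis unfolding Fxt key_identity[OF True] ..
    qed
    finally show ?thesis by (simp add: mur_le)
  next
    case False
    then have t': "0 \<le> - t" by simp
    have Jn: "0 \<le> Jr (- t)" by (rule LL_pos(2)[OF t'])
    have ki: "exp t * (1 - Jr (- t)) = Gf (- t)"
      using key_identity[OF t'] by (simp add: algebra_simps)
    have one: "0 \<le> 1 - Jr (- t)"
    proof -
      have "0 \<le> exp t * (1 - Jr (- t))" using ki Gf_nonneg[OF t'] by simp
      then show ?thesis by (simp add: zero_le_mult_iff)
    qed
    have "KK mur t = LL t" by (rule KK_mur)
    also have "\<dots> = (LL t + LL (- t)) - LL (- t)"
      using LL_pos(1)[OF t'] by (simp add: ennreal_add_diff_cancel_right)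
    also have "\<dots> = 1 - LL (- t)" by (simp only: LL_sum)
    also have "\<dots> = ennreal 1 - ennreal (Jr (- t))" unfolding LL_pos(1)[OF t'] by simp
    also have "\<dots> = ennreal (1 - Jr (- t))" by (rule ennreal_minus[OF Jn])
    finally have K: "KK mur t = ennreal (1 - Jr (- t))" .
    have "emeasure ?T {..t} = ennreal (exp t) * ennreal (1 - Jr (- t))"
      using trans_le[OF prob_mur sets_mur, of t] False K by simp
    also have "\<dots> = ennreal (Gf (- t))" using one ki by (simp add: ennreal_mult[symmetric])
    also have "\<dots> = ennreal (Fx t)" using False by (simp add: Fx_def)
    finally show ?thesis by (simp add: mur_le)
  qed
  have rdT: "real_distribution ?T" by (simp add: real_distribution_def real_distribution_axioms_def pT sT)
  have rdM: "real_distribution mur" by (simp add: real_distribution_def real_distribution_axioms_def prob_mur)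
  interpret T: prob_space ?T by (rule pT)
  have "?T = mur"
  proof (rule cdf_unique[OF rdT rdM])
    show "cdf ?T = cdf mur"
    proof
      fix t
      show "cdf ?T t = cdf mur t"
        using eq[of t] unfolding cdf_def by (simp add: T.emeasure_eq_measure M.emeasure_eq_measure)
    qed
  qed
  then show ?thesis unfolding ladder_stationary_def using prob_mur by simp
qed

theorem mainTheorem8:
  fixes \<mu> :: "real measure"
  shows "ladder_stationary \<mu> \<longleftrightarrow> \<mu> = density lborel (\<lambda>d. ennreal (rho_inf d))"
proof
  assume "ladder_stationary \<mu>"
  then show "\<mu> = density lborel (\<lambda>d. ennreal (rho_inf d))"
    using stat_unique mur_stationary by blast
next
  assume "\<mu> = density lborel (\<lambda>d. ennreal (rho_inf d))"
  then show "ladder_stationary \<mu>" using mur_stationary by simp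
qed


end
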